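(* Let $1\le p<\infty$ and $0<\delta<1$. There is a constant $c=c_{n,\delta}$ such that \[ \|f\|_{L^{p,\infty}}\le c\,p\,\|M^{\sharp,d}_{\delta}f\|_{L^{p,\infty}} \] for every locally integrable function $f$ on $\mathbb{R}^n$ such that $|\{x:|f(x)|>t\}|<\infty$ for every $t>0$.
   Context: For $0<s<\infty$, the sharp maximal function is $M^{\sharp}_s f(x)=\sup_{Q\ni x}\big(\frac1{|Q|}\int_Q|f-f_Q|^s\big)^{1/s}$, with $f_Q=\frac1{|Q|}\int_Q f$; $M^{\sharp,d}_s$ denotes the same supremum taken only over dyadic cubes containing $x$. Norms are unweighted on $\mathbb{R}^n$, with $\|g\|_{L^{p,\infty}}=\sup_{\lambda>0}\lambda|\{|g|>\lambda\}|^{1/p}$. *)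

theory Defs
  imports "HOL-Analysis.Analysis"
begin

definition dyadic_cubes :: "(real ^ 'n) set set" where
  "dyadic_cubes = {Q. \<exists>(k::int) (m::'n \<Rightarrow> int).
      Q = {x. \<forall>i. 2 powr k * of_int (m i) \<le> x $ i \<and> x $ i < 2 powr k * (of_int (m i) + 1)}}"

definition cube_avg :: "(real ^ 'n \<Rightarrow> real) \<Rightarrow> (real ^ 'n) set \<Rightarrow> real" where
  "cube_avg f Q = (\<integral>x\<in>Q. f x \<partial>lebesgue) / measure lebesgue Q"

definition mean_osc :: "real \<Rightarrow> (real ^ 'n \<Rightarrow> real) \<Rightarrow> (real ^ 'n) set \<Rightarrow> real" where
  "mean_osc s f Q = ((\<integral>x\<in>Q. \<bar>f x - cube_avg f Q\<bar> powr s \<partial>lebesgue) / measure lebesgue Q) powr (1 / s)"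

definition sharp_max_dyadic :: "real \<Rightarrow> (real ^ 'n \<Rightarrow> real) \<Rightarrow> real ^ 'n \<Rightarrow> ennreal" where
  "sharp_max_dyadic s f x = (SUP Q\<in>{Q\<in>dyadic_cubes. x \<in> Q}. ennreal (mean_osc s f Q))"

definition weak_Lp_norm :: "real \<Rightarrow> (real ^ 'n \<Rightarrow> ennreal) \<Rightarrow> ennreal" where
  "weak_Lp_norm p g = (SUP t\<in>{0<..}.
      (if emeasure lebesgue {x. ennreal t < g x} = \<infinity> then \<infinity>
       else ennreal (t * measure lebesgue {x. ennreal t < g x} powr (1 / p))))"

definition locally_integrable :: "(real ^ 'n \<Rightarrow> real) \<Rightarrow> bool" where
  "locally_integrable f \<longleftrightarrow> f \<in> borel_measurable lebesgue \<and>
     (\<forall>K. compact K \<longrightarrow> set_integrable lebesgue K f)"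

end

theory Submission
  imports Defs
begin

definition idx :: "int \<Rightarrow> real^'n \<Rightarrow> 'n \<Rightarrow> int" where
  "idx k x = (\<lambda>i. \<lfloor>x $ i / 2 powr k\<rfloor>)"

definition dc :: "int \<Rightarrow> ('n \<Rightarrow> int) \<Rightarrow> (real^'n) set" where
  "dc k m = {x. idx k x = m}"

lemma mem_dc: "x \<in> dc k m \<longleftrightarrow> idx k x = m"
  by (simp add: dc_def)

lemma dc_eq_Defs:
  fixes m :: "'n::finite \<Rightarrow> int"
  shows "{x. \<forall>i. 2 powr k * of_int (m i) \<le> x $ i \<and> x $ i < 2 powr k * (of_int (m i) + 1)} = dc k m"
proof -
  have key: "(2 powr real_of_int k * of_int (m i) \<le> x $ i \<and> x $ i < 2 powr real_of_int k * (of_int (m i) + 1))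
     \<longleftrightarrow> \<lfloor>x $ i / 2 powr real_of_int k\<rfloor> = m i" for x :: "real^'n" and i
  proof -
    have p: "(0::real) < 2 powr real_of_int k" by simp
    have a: "of_int (m i) \<le> x $ i / 2 powr real_of_int k \<longleftrightarrow> 2 powr real_of_int k * of_int (m i) \<le> x $ i"
      using p by (simp add: pos_le_divide_eq mult.commute[of "of_int (m i)"])
    have b: "x $ i / 2 powr real_of_int k < of_int (m i) + 1 \<longleftrightarrow> x $ i < 2 powr real_of_int k * (of_int (m i) + 1)"
      using p by (simp add: pos_divide_less_eq mult.commute[of "of_int (m i) + 1"])
    show ?thesis unfolding floor_eq_iff a b ..
  qed
  show ?thesis unfolding dc_def idx_def fun_eq_iff using key by auto
qed

lemma dyadic_cubes_iff: "Q \<in> dyadic_cubes \<longleftrightarrow> (\<exists>k m. Q = dc k m)"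
  unfolding dyadic_cubes_def dc_eq_Defs by auto

lemma floor_div_pow2:
  fixes x :: real and d :: nat
  shows "\<lfloor>x / 2 powr (k + int d)\<rfloor> = \<lfloor>x / 2 powr k\<rfloor> div 2 ^ d"
proof -
  have e: "2 powr (real_of_int k + real d) = 2 powr real_of_int k * 2 ^ d"
    by (simp add: powr_add powr_realpow)
  have "\<lfloor>x / 2 powr (k + int d)\<rfloor> = \<lfloor>(x / 2 powr k) / real_of_int (2 ^ d)\<rfloor>"
    by (simp add: e)
  also have "\<dots> = \<lfloor>x / 2 powr k\<rfloor> div 2 ^ d"
    by (rule floor_divide_real_eq_div) simp
  finally show ?thesis .
qed

lemma idx_up:
  assumes "k \<le> k'" shows "idx k' x = (\<lambda>i. idx k x i div 2 ^ nat (k' - k))"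
proof (rule ext)
  fix i
  obtain d where d: "k' = k + int d" using assms by (metis le_add_diff_inverse zle_iff_zadd)
  have "nat (k' - k) = d" using d by simp
  then show "idx k' x i = idx k x i div 2 ^ nat (k' - k)"
    unfolding idx_def d using floor_div_pow2[of "x$i" k d] by simp
qed

lemma idx_mono: "k \<le> k' \<Longrightarrow> idx k x = idx k y \<Longrightarrow> idx k' x = idx k' y"
  using idx_up[of k k' x] idx_up[of k k' y] by simp

lemma dc_nested: assumes "x \<in> dc k m "
 and "x \<in> dc k' m'" and "k \<le> k'" shows "dc k m \<subseteq> dc k' m'"
proof
  fix y assume "y \<in> dc k m"
  then have "idx k y = idx k x" using assms(1) by (simp add: mem_dc)
  then have "idx k' y = idx k' x" by (rule idx_mono[OF assms(3)])
  then show "y \<in> dc k' m'" using assms(2) by (simp add: mem_dc)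
qed

lemma dc_point: "x \<in> dc k m \<Longrightarrow> dc k m = dc k (idx k x)"
  by (simp add: mem_dc)

lemma dc_box:
  fixes k :: int and m :: "'n::finite \<Rightarrow> int"
  defines "a \<equiv> (\<chi> i. 2 powr real_of_int k * of_int (m i)) :: real^'n"
  defines "b \<equiv> (\<chi> i. 2 powr real_of_int k * (of_int (m i) + 1)) :: real^'n"
  shows "box a b \<subseteq> dc k m" "dc k m \<subseteq> cbox a b"
  unfolding dc_eq_Defs[symmetric] a_def b_def
  by (auto simp: mem_box_cart less_imp_le)

lemma dc_borel[measurable]: "dc k (m::'n::finite \<Rightarrow> int) \<in> sets borel"
proof -
  have "dc k m = {x::real^'n. \<forall>i. 2 powr real_of_int k * of_int (m i) \<le> x $ i \<and> x $ i < 2 powr real_of_int k * (of_int (m i) + 1)}"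
    by (rule dc_eq_Defs[symmetric])
  also have "\<dots> = (\<Inter>i. {x. 2 powr real_of_int k * of_int (m i) \<le> x $ i} \<inter> {x. x $ i < 2 powr real_of_int k * (of_int (m i) + 1)})"
    by auto
  also have "\<dots> \<in> sets borel"
    by (intro sets.countable_INT' countable_finite) auto
  finally show ?thesis .
qed

lemma dc_lebesgue[measurable]: "dc k (m::'n::finite \<Rightarrow> int) \<in> sets lebesgue"
  using dc_borel[of k m] by (simp add: sets_completionI_sets)

lemma emeasure_lebesgue_borel: "S \<in> sets borel \<Longrightarrow> emeasure lebesgue S = emeasure lborel S"
  by (simp add: main_part_sets)

lemma emeasure_dc:
  fixes k :: int and m :: "'n::finite \<Rightarrow> int"
  shows "emeasure lebesgue (dc k m) = ennreal ((2 powr real_of_int k) ^ CARD('n))"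
proof -
  define a where "a \<equiv> (\<chi> i. 2 powr real_of_int k * of_int (m i)) :: real^'n"
  define b where "b \<equiv> (\<chi> i. 2 powr real_of_int k * (of_int (m i) + 1)) :: real^'n"
  have le: "\<forall>e\<in>Basis. a \<bullet> e \<le> b \<bullet> e"
    by (auto simp: a_def b_def Basis_vec_def inner_axis)
  have eqbox: "emeasure lborel (box a b) = emeasure lborel (cbox a b)"
    using le by (simp add: emeasure_lborel_box_eq emeasure_lborel_cbox_eq)
  have ne: "cbox a b \<noteq> {}" using le by (simp add: box_ne_empty)
  have "emeasure lborel (cbox a b) = ennreal (measure lborel (cbox a b))"
    by (rule emeasure_eq_ennreal_measure) (use emeasure_lborel_cbox_finite[of a b] in auto)
  also have "measure lborel (cbox a b) = (\<Prod>i\<in>UNIV. b $ i - a $ i)"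
    using ne by (rule content_cbox_cart)
  also have "\<dots> = (\<Prod>i\<in>(UNIV::'n set). 2 powr real_of_int k)"
    by (simp add: a_def b_def algebra_simps)
  also have "\<dots> = (2 powr real_of_int k) ^ CARD('n)" by simp
  finally have c: "emeasure lborel (cbox a b) = ennreal ((2 powr real_of_int k) ^ CARD('n))" .
  have "emeasure lebesgue (box a b) \<le> emeasure lebesgue (dc k m)"
    using dc_box(1)[of k m] by (intro emeasure_mono) (auto simp: a_def b_def)
  moreover have "emeasure lebesgue (dc k m) \<le> emeasure lebesgue (cbox a b)"
    using dc_box(2)[of k m] by (intro emeasure_mono) (auto simp: a_def b_def)
  moreover have "emeasure lebesgue (box a b) = emeasure lborel (box a b)"
    by (simp add: emeasure_lebesgue_borel)
  moreover have "emeasure lebesgue (cbox a b) = emeasure lborel (cbox a b)"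
    by (simp add: emeasure_lebesgue_borel)
  ultimately show ?thesis using eqbox c by (metis antisym)
qed

lemma measure_dc: "measure lebesgue (dc k (m::'n::finite \<Rightarrow> int)) = (2 powr real_of_int k) ^ CARD('n)"
  by (simp add: measure_def emeasure_dc)

lemma dc_fin: "dc k m \<in> fmeasurable lebesgue"
  by (simp add: fmeasurable_def emeasure_dc)

lemma dc_nonempty: "(\<chi> i. 2 powr real_of_int k * of_int (m i)) \<in> dc k (m::'n::finite \<Rightarrow> int)"
  unfolding dc_eq_Defs[symmetric] by simp

lemma dc_ne: "dc k m \<noteq> {}" using dc_nonempty by blast

lemma pow2_mono: "(2 powr real_of_int k) ^ CARD('n::finite) \<le> (2 powr real_of_int k') ^ CARD('n)
   \<longleftrightarrow> k \<le> k'"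
proof -
  have c: "CARD('n) \<noteq> 0" by simp
  have "(2 powr real_of_int k) ^ CARD('n) \<le> (2 powr real_of_int k') ^ CARD('n) \<longleftrightarrow> 2 powr real_of_int k \<le> 2 powr real_of_int k'"
    using c by (intro power_mono_iff) auto
  also have "\<dots> \<longleftrightarrow> k \<le> k'" by simp
  finally show ?thesis .
qed

lemma dc_subset_lv:
  assumes "dc k m \<subseteq> dc k' (m'::'n::finite \<Rightarrow> int)" shows "k \<le> k'"
proof -
  have "measure lebesgue (dc k m) \<le> measure lebesgue (dc k' m')"
    using assms by (intro measure_mono_fmeasurable) (auto simp: dc_fin)
  then have "(2 powr real_of_int k) ^ CARD('n) \<le> (2 powr real_of_int k') ^ CARD('n)"
    by (simp only: measure_dc)
  then show ?thesis using pow2_mono by blast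
qed

lemma dc_inj: assumes "dc k m = dc k' (m'::'n::finite \<Rightarrow> int)" shows "k = k'" "m = m'"
proof -
  show kk: "k = k'" using dc_subset_lv[of k m k' m'] dc_subset_lv[of k' m' k m] assms by auto
  obtain x where x: "x \<in> dc k m" using dc_ne by blast
  then have "x \<in> dc k' m'" using assms by simp
  then show "m = m'" using x kk by (simp add: mem_dc)
qed

definition lv :: "(real^'n::finite) set \<Rightarrow> int" where
  "lv S = (THE k. \<exists>m. S = dc k m)"

lemma lv_dc[simp]: "lv (dc k (m::'n::finite \<Rightarrow> int)) = k"
  unfolding lv_def by (rule the_equality) (auto dest: dc_inj)

lemma dcube_repr:
  assumes "S \<in> dyadic_cubes" "x \<in> S" shows "S = dc (lv S) (idx (lv S) x)"
proof -
  obtain k m where S: "S = dc k m" using assms(1) dyadic_cubes_iff by blast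
  then show ?thesis using assms(2) by (simp add: mem_dc)
qed

lemma dc_in_dcubes[simp]: "dc k m \<in> dyadic_cubes"
  using dyadic_cubes_iff by blast

lemma dcube_sets[measurable]: "S \<in> dyadic_cubes \<Longrightarrow> S \<in> sets lebesgue"
  by (auto simp: dyadic_cubes_iff)

lemma dcube_nonempty: "S \<in> dyadic_cubes \<Longrightarrow> S \<noteq> {}"
  by (auto simp: dyadic_cubes_iff dc_ne)

lemma dcube_emeasure: "S \<in> dyadic_cubes \<Longrightarrow> emeasure lebesgue S = ennreal ((2 powr real_of_int (lv S)) ^ CARD('n::finite))"
  for S :: "(real^'n) set"
  by (auto simp: dyadic_cubes_iff emeasure_dc simp del: emeasure_completion)

lemma dcube_measure: "S \<in> dyadic_cubes \<Longrightarrow> measure lebesgue S = (2 powr real_of_int (lv S)) ^ CARD('n::finite)"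
  for S :: "(real^'n) set"
  by (auto simp: dyadic_cubes_iff measure_dc)

lemma dcube_measure_pos: "S \<in> dyadic_cubes \<Longrightarrow> 0 < measure lebesgue S"
  by (simp add: dcube_measure)

lemma dcube_fin: "S \<in> dyadic_cubes \<Longrightarrow> S \<in> fmeasurable lebesgue"
  by (auto simp: dyadic_cubes_iff dc_fin)

lemma dcube_emeasure_fin: "S \<in> dyadic_cubes \<Longrightarrow> emeasure lebesgue S < \<infinity>"
  by (simp add: dcube_emeasure del: emeasure_completion)

lemma dcube_subset_lv: "S \<in> dyadic_cubes \<Longrightarrow> T \<in> dyadic_cubes \<Longrightarrow> S \<subseteq> T \<Longrightarrow> lv S \<le> lv T"
  by (auto simp: dyadic_cubes_iff dc_subset_lv)

lemma dcube_sub_at_level: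
  assumes "S \<in> dyadic_cubes" "x \<in> S" "k \<le> lv S" shows "dc k (idx k x) \<subseteq> S"
proof -
  obtain k' m' where S: "S = dc k' m'" using assms(1) dyadic_cubes_iff by blast
  have l: "lv S = k'" "m' = idx k' x" using S assms(2) by (auto simp: mem_dc)
  have "dc k (idx k x) \<subseteq> dc k' (idx k' x)" by (rule dc_nested) (use assms(3) l in \<open>auto simp: mem_dc\<close>)
  then show ?thesis using S l by simp
qed

lemma dcube_sub_lv:
  assumes "S \<in> dyadic_cubes" "T \<in> dyadic_cubes" "x \<in> S" "x \<in> T" "lv S \<le> lv T"
  shows "S \<subseteq> T"
proof -
  obtain k' m' where S: "S = dc k' m'" using assms(1) dyadic_cubes_iff by blast
  have l: "lv S = k'" "m' = idx k' x" using S assms(3) by (auto simp: mem_dc)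
  show ?thesis using dcube_sub_at_level[OF assms(2,4,5)] S l by simp
qed

lemma dcube_nested:
  assumes "S \<in> dyadic_cubes" "T \<in> dyadic_cubes" "x \<in> S" "x \<in> T"
  shows "S \<subseteq> T \<or> T \<subseteq> S"
  using dcube_sub_lv[OF assms] dcube_sub_lv[OF assms(2,1,4,3)] by linarith

lemma dcube_disj_or_nested:
  assumes "S \<in> dyadic_cubes" "T \<in> dyadic_cubes"
  shows "S \<inter> T = {} \<or> S \<subseteq> T \<or> T \<subseteq> S"
  using dcube_nested[OF assms] by blast

lemma dcube_eq_of_lv:
  assumes "S \<in> dyadic_cubes" "T \<in> dyadic_cubes" "S \<subseteq> T" "lv S = lv T" shows "S = T"
proof -
  obtain x where x: "x \<in> S" using dcube_nonempty[OF assms(1)] by blast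
  then show ?thesis using dcube_repr[OF assms(1) x] dcube_repr[OF assms(2)] assms by auto
qed

lemma dcube_strict_lv:
  assumes "S \<in> dyadic_cubes" "T \<in> dyadic_cubes" "S \<subset> T" shows "lv S < lv T"
  using dcube_subset_lv[OF assms(1,2)] dcube_eq_of_lv[OF assms(1,2)] assms(3) by force

lemma countable_dcubes: "countable (dyadic_cubes :: (real^'n::finite) set set)"
proof -
  have "(dyadic_cubes :: (real^'n) set set) = (\<lambda>(k,m). dc k m) ` UNIV"
    by (force simp: dyadic_cubes_iff)
  then show ?thesis by (metis countable_image countableI_type)
qed

definition par :: "(real^'n::finite) set \<Rightarrow> (real^'n) set" where
  "par S = dc (lv S + 1) (idx (lv S + 1) (SOME x. x \<in> S))"

lemma par_props:
  fixes S :: "(real^'n::finite) set"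
  assumes "S \<in> dyadic_cubes"
  shows "par S \<in> dyadic_cubes" "S \<subseteq> par S" "lv (par S) = lv S + 1" "S \<noteq> par S"
    "measure lebesgue (par S) = 2 ^ CARD('n) * measure lebesgue S"
    "emeasure lebesgue (par S) = 2 ^ CARD('n) * emeasure lebesgue S"
proof -
  define x where "x = (SOME x. x \<in> S)"
  have x: "x \<in> S" unfolding x_def using dcube_nonempty[OF assms] by (simp add: some_in_eq)
  show 1: "par S \<in> dyadic_cubes" by (simp add: par_def)
  show 3: "lv (par S) = lv S + 1" by (simp add: par_def)
  have xp: "x \<in> par S" unfolding par_def x_def[symmetric] by (simp add: mem_dc)
  show 2: "S \<subseteq> par S" by (rule dcube_sub_lv[OF assms 1 x xp]) (simp add: 3)
  show "S \<noteq> par S" using 3 by auto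
  have e: "2 powr real_of_int (lv S + 1) = 2 * 2 powr real_of_int (lv S)"
    by (simp add: powr_add)
  show m: "measure lebesgue (par S) = 2 ^ CARD('n) * measure lebesgue S"
    using dcube_measure[OF 1] dcube_measure[OF assms] 3 e by (simp add: power_mult_distrib)
  have "emeasure lebesgue (par S) = ennreal (2 ^ CARD('n)) * emeasure lebesgue S"
    using dcube_emeasure[OF 1] dcube_emeasure[OF assms] 3 e
    by (simp add: power_mult_distrib ennreal_mult del: emeasure_completion)
  moreover have "ennreal (2 ^ CARD('n)) = 2 ^ CARD('n)"
    by (metis ennreal_numeral ennreal_power zero_le_numeral)
  ultimately show "emeasure lebesgue (par S) = 2 ^ CARD('n) * emeasure lebesgue S" by simp
qed

lemma par_least:
  assumes "S \<in> dyadic_cubes" "T \<in> dyadic_cubes" "S \<subset> T" shows "par S \<subseteq> T"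
proof -
  obtain x where x: "x \<in> S" using dcube_nonempty[OF assms(1)] by blast
  have l: "lv S + 1 \<le> lv T" using dcube_strict_lv[OF assms] by simp
  have xp: "x \<in> par S" using par_props(2)[OF assms(1)] x by auto
  have "par S = dc (lv (par S)) (idx (lv (par S)) x)"
    using dcube_repr[OF par_props(1)[OF assms(1)] xp] .
  then show ?thesis using dcube_sub_at_level[OF assms(2), of x "lv S + 1"] l x assms(3)
    par_props(3)[OF assms(1)] by auto
qed

definition maxel :: "(real^'n::finite) set set \<Rightarrow> (real^'n) set set" where
  "maxel F = {T\<in>F. \<forall>T'\<in>F. T \<subseteq> T' \<longrightarrow> T' = T}"

lemma maxel_exists:
  assumes F: "F \<subseteq> dyadic_cubes" and S: "S \<in> F" and bd: "\<And>T. T \<in> F \<Longrightarrow> lv T \<le> K"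
  shows "\<exists>T\<in>maxel F. S \<subseteq> T"
proof -
  have Sd: "S \<in> dyadic_cubes" using F S by auto
  obtain x where x: "x \<in> S" using dcube_nonempty[OF Sd] by blast
  define A where "A = {k. lv S \<le> k \<and> dc k (idx k x) \<in> F}"
  have "A \<subseteq> {lv S..K}" unfolding A_def using bd by fastforce
  then have finA: "finite A" by (rule finite_subset) simp
  have "lv S \<in> A" unfolding A_def using dcube_repr[OF Sd x] S by (metis order_refl mem_Collect_eq)
  then have neA: "A \<noteq> {}" by blast
  define k where "k = Max A"
  have kA: "k \<in> A" unfolding k_def using finA neA by (rule Max_in)
  define T where "T = dc k (idx k x)"
  have TF: "T \<in> F" using kA unfolding A_def T_def by simp
  have xT: "x \<in> T" by (simp add: T_def mem_dc)
  have Td: "T \<in> dyadic_cubes" by (simp add: T_def)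
  have ST: "S \<subseteq> T"
    by (rule dcube_sub_lv[OF Sd _ x xT]) (use kA in \<open>auto simp: A_def T_def\<close>)
  have "\<forall>T'\<in>F. T \<subseteq> T' \<longrightarrow> T' = T"
  proof (intro ballI impI)
    fix T' assume T'F: "T' \<in> F" and TT': "T \<subseteq> T'"
    have T'd: "T' \<in> dyadic_cubes" using F T'F by auto
    have xT': "x \<in> T'" using xT TT' by auto
    have r: "T' = dc (lv T') (idx (lv T') x)" using dcube_repr[OF T'd xT'] .
    have "lv T \<le> lv T'" using dcube_subset_lv[OF _ T'd TT'] by (simp add: T_def)
    then have "k \<le> lv T'" by (simp add: T_def)
    moreover have "lv T' \<in> A" unfolding A_def using r T'F \<open>k \<le> lv T'\<close> kA
      by (auto simp: A_def)
    then have "lv T' \<le> k" unfolding k_def using finA by simp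
    ultimately have "lv T' = k" by simp
    then show "T' = T" using r by (simp add: T_def)
  qed
  then show ?thesis using TF ST unfolding maxel_def by blast
qed

lemma maxel_sub: "maxel F \<subseteq> F" by (auto simp: maxel_def)

lemma maxel_disj:
  assumes "F \<subseteq> dyadic_cubes" "T1 \<in> maxel F" "T2 \<in> maxel F" "T1 \<noteq> T2"
  shows "T1 \<inter> T2 = {}"
proof -
  have "T1 \<in> dyadic_cubes" "T2 \<in> dyadic_cubes" using assms by (auto simp: maxel_def)
  then show ?thesis using dcube_disj_or_nested[of T1 T2] assms by (auto simp: maxel_def)
qed

lemma maxel_disjoint_family:
  assumes "F \<subseteq> dyadic_cubes" shows "disjoint_family_on (\<lambda>T. T) (maxel F)"
  using maxel_disj[OF assms] by (auto simp: disjoint_family_on_def)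

lemma maxel_countable: "F \<subseteq> dyadic_cubes \<Longrightarrow> countable (maxel F)"
  using countable_dcubes maxel_sub by (metis countable_subset order_trans)

lemma dc_coord_close:
  assumes "y \<in> dc k (idx k x)" shows "\<bar>y $ i - x $ i\<bar> < 2 powr real_of_int k"
proof -
  have x: "x \<in> dc k (idx k x)" by (simp add: mem_dc)
  have "2 powr real_of_int k * of_int (idx k x i) \<le> y $ i \<and> y $ i < 2 powr real_of_int k * (of_int (idx k x i) + 1)"
    using assms unfolding dc_eq_Defs[symmetric] by blast
  moreover have "2 powr real_of_int k * of_int (idx k x i) \<le> x $ i \<and> x $ i < 2 powr real_of_int k * (of_int (idx k x i) + 1)"
    using x unfolding dc_eq_Defs[symmetric] by blast
  ultimately show ?thesis by (auto simp: algebra_simps abs_less_iff)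
qed

lemma small_cube_in_open:
  fixes x :: "real^'n::finite"
  assumes "open U" "x \<in> U"
  shows "\<exists>k0. \<forall>k\<le>k0. dc k (idx k x) \<subseteq> U"
proof -
  obtain e where e: "e > 0" "ball x e \<subseteq> U" using assms open_contains_ball by blast
  have c: "real CARD('n) > 0" by simp
  obtain n :: nat where n: "(1/2) ^ n < e / real CARD('n)"
    using real_arch_pow_inv[of "e / real CARD('n)" "1/2"] e c by auto
  have "\<forall>k\<le>- int n. dc k (idx k x) \<subseteq> U"
  proof (intro allI impI subsetI)
    fix k y assume k: "k \<le> - int n" and y: "y \<in> dc k (idx k x)"
    have "2 powr real_of_int k \<le> 2 powr real_of_int (- int n)" using k by simp
    also have "\<dots> = (1/2) ^ n" by (simp add: powr_minus powr_realpow power_one_over inverse_eq_divide)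
    finally have p: "2 powr real_of_int k < e / real CARD('n)" using n by linarith
    have "dist x y = norm (y - x)" by (simp add: dist_norm norm_minus_commute)
    also have "\<dots> \<le> (\<Sum>i\<in>UNIV. \<bar>(y - x) $ i\<bar>)" by (rule norm_le_l1_cart)
    also have "\<dots> < (\<Sum>i\<in>(UNIV::'n set). e / real CARD('n))"
    proof (rule sum_strict_mono)
      fix i :: 'n
      show "\<bar>(y - x) $ i\<bar> < e / real CARD('n)" using dc_coord_close[OF y, of i] p by simp
    qed auto
    also have "\<dots> = e" using c by simp
    finally have "y \<in> ball x e" by simp
    then show "y \<in> U" using e by blast
  qed
  then show ?thesis by blast
qed

lemma density_null:
  fixes B P :: "(real^'n::finite) set"
  assumes P: "P \<in> dyadic_cubes" and BP: "B \<subseteq> P" and Bm: "B \<in> sets lebesgue"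
    and th: "\<theta> < 1"
    and H: "\<And>S. S \<in> dyadic_cubes \<Longrightarrow> S \<subseteq> P \<Longrightarrow> emeasure lebesgue (S \<inter> B) \<le> ennreal \<theta> * emeasure lebesgue S"
  shows "emeasure lebesgue B = 0"
proof -
  define t where "t = max \<theta> 0"
  have t3: "ennreal \<theta> = ennreal t"
  proof (cases "\<theta> \<ge> 0")
    case True then show ?thesis by (simp add: t_def)
  next
    case False then show ?thesis by (simp add: t_def ennreal_neg)
  qed
  have t: "0 \<le> t" "t < 1" "ennreal \<theta> = ennreal t" using th t3 by (auto simp: t_def)
  have Bfin: "emeasure lebesgue B < \<infinity>"
    using emeasure_mono[OF BP, of lebesgue] dcube_emeasure_fin[OF P] by (simp add: dcube_sets[OF P])
  define b where "b = measure lebesgue B"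
  have bB: "emeasure lebesgue B = ennreal b" using Bfin unfolding b_def by (intro emeasure_eq_ennreal_measure) simp
  have b0: "0 \<le> b" unfolding b_def by (rule measure_nonneg)
  have key: "b \<le> t * (b + e)" if e: "e > 0" for e
  proof -
    obtain T where T: "open T" "B \<subseteq> T" "(T - B) \<in> lmeasurable" "emeasure lebesgue (T - B) < ennreal e"
      using sets_lebesgue_outer_open[OF Bm e] by blast
    define F where "F = {S\<in>dyadic_cubes. S \<subseteq> T \<inter> P}"
    have Fd: "F \<subseteq> dyadic_cubes" by (auto simp: F_def)
    have Fb: "\<And>S. S \<in> F \<Longrightarrow> lv S \<le> lv P" using P by (auto simp: F_def intro: dcube_subset_lv)
    have cov: "B \<subseteq> \<Union>(maxel F)"
    proof
      fix x assume xB: "x \<in> B"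
      obtain k0 where k0: "\<forall>k\<le>k0. dc k (idx k x) \<subseteq> T" using small_cube_in_open[OF T(1)] xB T(2) by blast
      define k where "k = min k0 (lv P)"
      have "dc k (idx k x) \<subseteq> P" using dcube_sub_at_level[OF P, of x k] xB BP by (auto simp: k_def)
      moreover have "dc k (idx k x) \<subseteq> T" using k0 by (simp add: k_def)
      ultimately have "dc k (idx k x) \<in> F" by (simp add: F_def)
      then obtain M where "M \<in> maxel F" "dc k (idx k x) \<subseteq> M" using maxel_exists[OF Fd _ Fb] by blast
      moreover have "x \<in> dc k (idx k x)" by (simp add: mem_dc)
      ultimately show "x \<in> \<Union>(maxel F)" by blast
    qed
    have cM: "countable (maxel F)" using maxel_countable[OF Fd] .
    have dM: "disjoint_family_on (\<lambda>M. M) (maxel F)" using maxel_disjoint_family[OF Fd] .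
    have Md: "\<And>M. M \<in> maxel F \<Longrightarrow> M \<in> dyadic_cubes" using Fd maxel_sub by blast
    have MP: "\<And>M. M \<in> maxel F \<Longrightarrow> M \<subseteq> T \<inter> P" using maxel_sub by (auto simp: F_def)
    have U1: "emeasure lebesgue (\<Union>M\<in>maxel F. M \<inter> B) = (\<integral>\<^sup>+M. emeasure lebesgue (M \<inter> B) \<partial>count_space (maxel F))"
      by (rule emeasure_UN_countable) (use cM dM Md Bm in \<open>auto simp: disjoint_family_on_def\<close>)
    have U2: "emeasure lebesgue (\<Union>M\<in>maxel F. M) = (\<integral>\<^sup>+M. emeasure lebesgue M \<partial>count_space (maxel F))"
      by (rule emeasure_UN_countable) (use cM dM Md in auto)
    have I1: "(\<integral>\<^sup>+M. emeasure lebesgue (M \<inter> B) \<partial>count_space (maxel F))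
        \<le> (\<integral>\<^sup>+M. ennreal t * emeasure lebesgue M \<partial>count_space (maxel F))"
    proof (rule nn_integral_mono)
      fix M assume "M \<in> space (count_space (maxel F))"
      then have M: "M \<in> maxel F" by simp
      have "emeasure lebesgue (M \<inter> B) \<le> ennreal \<theta> * emeasure lebesgue M"
        using H[OF Md[OF M]] MP[OF M] by blast
      then show "emeasure lebesgue (M \<inter> B) \<le> ennreal t * emeasure lebesgue M" using t(3) by simp
    qed
    have I2: "(\<integral>\<^sup>+M. ennreal t * emeasure lebesgue M \<partial>count_space (maxel F))
        = ennreal t * (\<integral>\<^sup>+M. emeasure lebesgue M \<partial>count_space (maxel F))"
      by (rule nn_integral_cmult) auto
    have E1: "emeasure lebesgue B = emeasure lebesgue (\<Union>M\<in>maxel F. M \<inter> B)"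
      using cov by (intro arg_cong[where f="emeasure lebesgue"]) auto
    have E2: "emeasure lebesgue (\<Union>M\<in>maxel F. M) \<le> emeasure lebesgue (B \<union> (T - B))"
      using sets.Un[OF Bm fmeasurableD[OF T(3)]] MP by (intro emeasure_mono) auto
    have E3: "emeasure lebesgue (B \<union> (T - B)) \<le> emeasure lebesgue B + emeasure lebesgue (T - B)"
      by (rule emeasure_subadditive) (use Bm T(3) in auto)
    have E4: "emeasure lebesgue B + emeasure lebesgue (T - B) \<le> ennreal b + ennreal e"
      using bB T(4) by (intro add_mono) auto
    have "emeasure lebesgue (\<Union>M\<in>maxel F. M) \<le> ennreal b + ennreal e"
      using E2 E3 E4 by (meson order_trans)
    then have "ennreal t * emeasure lebesgue (\<Union>M\<in>maxel F. M) \<le> ennreal t * (ennreal b + ennreal e)"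
      by (rule mult_left_mono) simp
    note X = this
    have "ennreal b = emeasure lebesgue B" using bB by simp
    also have "\<dots> = (\<integral>\<^sup>+M. emeasure lebesgue (M \<inter> B) \<partial>count_space (maxel F))" using E1 U1 by simp
    also have "\<dots> \<le> ennreal t * (\<integral>\<^sup>+M. emeasure lebesgue M \<partial>count_space (maxel F))" using I1 I2 by simp
    also have "\<dots> = ennreal t * emeasure lebesgue (\<Union>M\<in>maxel F. M)" using U2 by simp
    also have "\<dots> \<le> ennreal t * (ennreal b + ennreal e)" using X .
    also have "\<dots> = ennreal (t * (b + e))"
      using e t b0 by (simp add: ennreal_plus ennreal_mult)
    finally have "ennreal b \<le> ennreal (t * (b + e))" .
    then show ?thesis using e t b0 by (simp add: ennreal_le_iff)
  qed
  have "b \<le> 0"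
  proof (rule ccontr)
    assume "\<not> b \<le> 0"
    then have b: "b > 0" by simp
    define e where "e = b * (1 - t) / 2"
    have e: "e > 0" using b t by (simp add: e_def)
    have "b \<le> t * b + t * e" using key[OF e] by (simp add: algebra_simps)
    also have "t * e \<le> e" using t e by (simp add: mult_le_cancel_right1)
    finally have "b * (1 - t) \<le> e" by (simp add: algebra_simps)
    then show False using b t by (simp add: e_def)
  qed
  then have "b = 0" using b0 by simp
  then show ?thesis using bB by simp
qed

lemma powr_subadd:
  fixes a b d :: real
  assumes "0 \<le> a" "0 \<le> b" "0 < d" "d \<le> 1"
  shows "(a + b) powr d \<le> a powr d + b powr d"
proof (cases "a + b = 0")
  case True then show ?thesis using assms by simp
next
  case False
  define s where "s = a + b"
  have s: "s > 0" using False assms by (simp add: s_def)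
  have fa: "a / s \<le> (a / s) powr d"
  proof -
    have "(a/s) powr 1 \<le> (a/s) powr d"
      by (rule powr_mono') (use assms s in \<open>auto simp: s_def\<close>)
    then show ?thesis using assms s by simp
  qed
  have fb: "b / s \<le> (b / s) powr d"
  proof -
    have "(b/s) powr 1 \<le> (b/s) powr d"
      by (rule powr_mono') (use assms s in \<open>auto simp: s_def\<close>)
    then show ?thesis using assms s by simp
  qed
  have "s powr d = s powr d * (a / s + b / s)" using s by (simp add: s_def add_divide_distrib[symmetric])
  also have "\<dots> \<le> s powr d * ((a / s) powr d + (b / s) powr d)"
    by (rule mult_left_mono) (use fa fb in auto)
  also have "\<dots> = a powr d + b powr d"
    using s by (simp add: powr_divide distrib_left)
  finally show ?thesis by (simp add: s_def)
qed

lemma powr_le_1_plus: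
  fixes a d :: real assumes "0 \<le> a" "0 < d" "d \<le> 1"
  shows "a powr d \<le> 1 + a"
proof (cases "a \<le> 1")
  case True
  then have "a powr d \<le> 1 powr d" using assms by (intro powr_mono2) auto
  then show ?thesis using assms by simp
next
  case False
  then have "a powr d \<le> a powr 1" using assms by (intro powr_mono) auto
  then show ?thesis using assms False by simp
qed

lemma powr_le_cancel_base:
  fixes x y d :: real assumes "0 < d" "0 \<le> x" "0 \<le> y" "x powr d \<le> y powr d" shows "x \<le> y"
proof (rule ccontr)
  assume "\<not> x \<le> y"
  then have "y powr d < x powr d" using assms by (intro powr_less_mono2) auto
  then show False using assms by simp
qed

locale sharp =
  fixes f :: "real^'n::finite \<Rightarrow> real" and \<delta> :: real
  assumes d0: "0 < \<delta>" and d1: "\<delta> < 1"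
    and fmeas[measurable]: "f \<in> borel_measurable lebesgue"
    and loc: "\<And>Q. Q \<in> dyadic_cubes \<Longrightarrow> set_integrable lebesgue Q f"
begin

definition g :: "real \<Rightarrow> real^'n \<Rightarrow> ennreal" where
  "g c x = ennreal (\<bar>f x - c\<bar> powr \<delta>)"

lemma g_meas[measurable]: "g c \<in> borel_measurable lebesgue"
  unfolding g_def by measurable

definition J :: "(real^'n) set \<Rightarrow> real \<Rightarrow> ennreal" where
  "J Q c = emeasure (density lebesgue (g c)) Q"

abbreviation osc :: "(real^'n) set \<Rightarrow> real" where
  "osc Q \<equiv> mean_osc \<delta> f Q"

abbreviation avg :: "(real^'n) set \<Rightarrow> real" where
  "avg Q \<equiv> cube_avg f Q"

lemma J_eq: "Q \<in> sets lebesgue \<Longrightarrow> J Q c = (\<integral>\<^sup>+x. g c x * indicator Q x \<partial>lebesgue)"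
  unfolding J_def by (simp add: emeasure_density)

lemma J_mono: "Q \<subseteq> Q' \<Longrightarrow> Q' \<in> sets lebesgue \<Longrightarrow> J Q c \<le> J Q' c"
  unfolding J_def by (rule emeasure_mono) auto

lemma J_UN:
  assumes "countable I" "I \<subseteq> dyadic_cubes" "disjoint_family_on (\<lambda>Q. Q) I"
  shows "J (\<Union>I) c = (\<integral>\<^sup>+Q. J Q c \<partial>count_space I)"
proof -
  have "emeasure (density lebesgue (g c)) (\<Union>Q\<in>I. Q) = (\<integral>\<^sup>+Q. emeasure (density lebesgue (g c)) Q \<partial>count_space I)"
    by (rule emeasure_UN_countable) (use assms dcube_sets in auto)
  then show ?thesis by (simp add: J_def)
qed

lemma J_fin:
  assumes Q: "Q \<in> dyadic_cubes" shows "J Q c < \<infinity>"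
proof -
  have Qm[measurable]: "Q \<in> sets lebesgue" using Q by (rule dcube_sets)
  have int: "integrable lebesgue (\<lambda>x. indicator Q x *\<^sub>R f x)" using loc[OF Q] by (simp add: set_integrable_def)
  have i1: "(\<integral>\<^sup>+x. ennreal (norm (indicator Q x *\<^sub>R f x)) \<partial>lebesgue) < \<infinity>"
    using int unfolding integrable_iff_bounded by blast
  have i2: "(\<integral>\<^sup>+x. ennreal (1 + \<bar>c\<bar>) * indicator Q x \<partial>lebesgue) < \<infinity>"
  proof -
    have "(\<integral>\<^sup>+x. ennreal (1 + \<bar>c\<bar>) * indicator Q x \<partial>lebesgue) = ennreal (1 + \<bar>c\<bar>) * emeasure lebesgue Q"
      using nn_integral_cmult_indicator[OF Qm, of "ennreal (1 + \<bar>c\<bar>)"] by simp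
    also have "\<dots> < \<infinity>" using dcube_emeasure_fin[OF Q] by (simp add: ennreal_mult_less_top)
    finally show ?thesis .
  qed
  have "J Q c = (\<integral>\<^sup>+x. g c x * indicator Q x \<partial>lebesgue)" using J_eq[OF Qm] .
  also have "\<dots> \<le> (\<integral>\<^sup>+x. ennreal (norm (indicator Q x *\<^sub>R f x)) + ennreal (1 + \<bar>c\<bar>) * indicator Q x \<partial>lebesgue)"
  proof (rule nn_integral_mono)
    fix x
    show "g c x * indicator Q x \<le> ennreal (norm (indicator Q x *\<^sub>R f x)) + ennreal (1 + \<bar>c\<bar>) * indicator Q x"
    proof (cases "x \<in> Q")
      case True
      have "\<bar>f x - c\<bar> powr \<delta> \<le> 1 + \<bar>f x - c\<bar>" using d0 d1 by (intro powr_le_1_plus) auto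
      also have "\<dots> \<le> \<bar>f x\<bar> + (1 + \<bar>c\<bar>)" by simp
      finally have "ennreal (\<bar>f x - c\<bar> powr \<delta>) \<le> ennreal (\<bar>f x\<bar> + (1 + \<bar>c\<bar>))" by (rule ennreal_leI)
      then show ?thesis using True by (simp add: g_def ennreal_plus)
    qed simp
  qed
  also have "\<dots> = (\<integral>\<^sup>+x. ennreal (norm (indicator Q x *\<^sub>R f x)) \<partial>lebesgue) + (\<integral>\<^sup>+x. ennreal (1 + \<bar>c\<bar>) * indicator Q x \<partial>lebesgue)"
    by (rule nn_integral_add) measurable
  also have "\<dots> < \<infinity>" using i1 i2 by (auto simp: less_top)
  finally show ?thesis .
qed

lemma J_real: "Q \<in> dyadic_cubes \<Longrightarrow> J Q c = ennreal (enn2real (J Q c))"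
  using J_fin by (simp add: ennreal_enn2real less_top)

lemma osc_eq:
  assumes Q: "Q \<in> dyadic_cubes"
  shows "osc Q = (enn2real (J Q (avg Q)) / measure lebesgue Q) powr (1 / \<delta>)"
proof -
  have Qm: "Q \<in> sets lebesgue" using Q by (rule dcube_sets)
  have "(LINT x:Q|lebesgue. \<bar>f x - avg Q\<bar> powr \<delta>) = integral\<^sup>L lebesgue (\<lambda>x. indicator Q x *\<^sub>R \<bar>f x - avg Q\<bar> powr \<delta>)"
    by (simp add: set_lebesgue_integral_def)
  also have "\<dots> = enn2real (\<integral>\<^sup>+x. ennreal (indicator Q x *\<^sub>R \<bar>f x - avg Q\<bar> powr \<delta>) \<partial>lebesgue)"
    by (rule integral_eq_nn_integral) (use Qm in auto)
  also have "(\<integral>\<^sup>+x. ennreal (indicator Q x *\<^sub>R \<bar>f x - avg Q\<bar> powr \<delta>) \<partial>lebesgue) = J Q (avg Q)"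
    unfolding J_eq[OF Qm] by (intro nn_integral_cong) (auto simp: g_def indicator_def)
  finally show ?thesis unfolding mean_osc_def by simp
qed

lemma osc_nonneg: "Q \<in> dyadic_cubes \<Longrightarrow> 0 \<le> osc Q"
  by (simp add: osc_eq)

lemma osc_le_J:
  assumes Q: "Q \<in> dyadic_cubes" and le: "osc Q \<le> \<eta>"
  shows "J Q (avg Q) \<le> ennreal (\<eta> powr \<delta> * measure lebesgue Q)"
proof -
  define j where "j = enn2real (J Q (avg Q))"
  define m where "m = measure lebesgue Q"
  have m: "m > 0" using dcube_measure_pos[OF Q] by (simp add: m_def)
  have j: "j \<ge> 0" by (simp add: j_def)
  have "osc Q = (j / m) powr (1/\<delta>)" using osc_eq[OF Q] by (simp add: j_def m_def)
  then have "(j / m) = (osc Q) powr \<delta>"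
    using d0 j m by (simp add: powr_powr)
  also have "\<dots> \<le> \<eta> powr \<delta>" using le osc_nonneg[OF Q] d0 by (intro powr_mono2) auto
  finally have "j \<le> \<eta> powr \<delta> * m" using m by (simp add: divide_le_eq)
  then have "ennreal j \<le> ennreal (\<eta> powr \<delta> * m)" by (rule ennreal_leI)
  moreover have "J Q (avg Q) = ennreal j" using J_real[OF Q, of "avg Q"] by (simp add: j_def)
  ultimately show ?thesis by (simp add: m_def)
qed

lemma J_cheb:
  assumes Qm: "Q \<in> sets lebesgue" and t: "0 < t"
  shows "ennreal (t powr \<delta>) * emeasure lebesgue (Q \<inter> {x. t < \<bar>f x - c\<bar>}) \<le> J Q c"
proof -
  have Am: "Q \<inter> {x. t < \<bar>f x - c\<bar>} \<in> sets lebesgue" using Qm by measurable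
  have "ennreal (t powr \<delta>) * emeasure lebesgue (Q \<inter> {x. t < \<bar>f x - c\<bar>}) =
       (\<integral>\<^sup>+x. ennreal (t powr \<delta>) * indicator (Q \<inter> {x. t < \<bar>f x - c\<bar>}) x \<partial>lebesgue)"
    using nn_integral_cmult_indicator[OF Am] by simp
  also have "\<dots> \<le> (\<integral>\<^sup>+x. g c x * indicator Q x \<partial>lebesgue)"
  proof (rule nn_integral_mono)
    fix x show "ennreal (t powr \<delta>) * indicator (Q \<inter> {x. t < \<bar>f x - c\<bar>}) x \<le> g c x * indicator Q x"
    proof (cases "x \<in> Q \<and> t < \<bar>f x - c\<bar>")
      case True
      then have "t powr \<delta> \<le> \<bar>f x - c\<bar> powr \<delta>" using t d0 by (intro powr_mono2) auto
      then show ?thesis using True by (simp add: g_def ennreal_leI)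
    qed auto
  qed
  finally show ?thesis using J_eq[OF Qm] by simp
qed

lemma J_drift:
  assumes Qm: "Q \<in> sets lebesgue"
  shows "ennreal (\<bar>c1 - c2\<bar> powr \<delta>) * emeasure lebesgue Q \<le> J Q c1 + J Q c2"
proof -
  have "ennreal (\<bar>c1 - c2\<bar> powr \<delta>) * emeasure lebesgue Q = (\<integral>\<^sup>+x. ennreal (\<bar>c1 - c2\<bar> powr \<delta>) * indicator Q x \<partial>lebesgue)"
    using nn_integral_cmult_indicator[OF Qm] by simp
  also have "\<dots> \<le> (\<integral>\<^sup>+x. g c1 x * indicator Q x + g c2 x * indicator Q x \<partial>lebesgue)"
  proof (rule nn_integral_mono)
    fix x
    have "\<bar>c1 - c2\<bar> \<le> \<bar>f x - c1\<bar> + \<bar>f x - c2\<bar>" by simp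
    then have "\<bar>c1 - c2\<bar> powr \<delta> \<le> (\<bar>f x - c1\<bar> + \<bar>f x - c2\<bar>) powr \<delta>" using d0 by (intro powr_mono2) auto
    also have "\<dots> \<le> \<bar>f x - c1\<bar> powr \<delta> + \<bar>f x - c2\<bar> powr \<delta>" using d0 d1 by (intro powr_subadd) auto
    finally have "ennreal (\<bar>c1 - c2\<bar> powr \<delta>) \<le> ennreal (\<bar>f x - c1\<bar> powr \<delta> + \<bar>f x - c2\<bar> powr \<delta>)" by (rule ennreal_leI)
    also have "\<dots> = g c1 x + g c2 x" by (simp add: g_def ennreal_plus)
    finally have "ennreal (\<bar>c1 - c2\<bar> powr \<delta>) \<le> g c1 x + g c2 x" .
    then show "ennreal (\<bar>c1 - c2\<bar> powr \<delta>) * indicator Q x \<le> g c1 x * indicator Q x + g c2 x * indicator Q x"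
      by (cases "x \<in> Q") auto
  qed
  also have "\<dots> = J Q c1 + J Q c2" unfolding J_eq[OF Qm] by (rule nn_integral_add) (use Qm in measurable)
  finally show ?thesis .
qed

lemma drift_bound:
  assumes Q: "Q \<in> dyadic_cubes" and a: "0 \<le> a" and b: "0 \<le> b"
    and h1: "J Q c1 \<le> ennreal (a * measure lebesgue Q)" and h2: "J Q c2 \<le> ennreal (b * measure lebesgue Q)"
  shows "\<bar>c1 - c2\<bar> powr \<delta> \<le> a + b"
proof -
  define m where "m = measure lebesgue Q"
  have m: "m > 0" using dcube_measure_pos[OF Q] by (simp add: m_def)
  have em: "emeasure lebesgue Q = ennreal m" using dcube_emeasure[OF Q] dcube_measure[OF Q] by (simp add: m_def del: emeasure_completion)
  have "ennreal (\<bar>c1 - c2\<bar> powr \<delta> * m) = ennreal (\<bar>c1 - c2\<bar> powr \<delta>) * emeasure lebesgue Q"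
    using em m by (simp add: ennreal_mult)
  also have "\<dots> \<le> J Q c1 + J Q c2" by (rule J_drift[OF dcube_sets[OF Q]])
  also have "\<dots> \<le> ennreal (a * m) + ennreal (b * m)" using h1 h2 by (intro add_mono) (simp_all add: m_def)
  also have "\<dots> = ennreal ((a + b) * m)" using a b m by (simp add: ennreal_plus distrib_right)
  finally have "\<bar>c1 - c2\<bar> powr \<delta> * m \<le> (a + b) * m" using a b m by (subst (asm) ennreal_le_iff) auto
  then show ?thesis using m by simp
qed

end

context sharp begin

definition E :: "real \<Rightarrow> (real^'n) set" where
  "E \<eta> = {x. ennreal \<eta> < sharp_max_dyadic \<delta> f x}"

lemma E_eq:
  assumes "0 \<le> \<eta>" shows "E \<eta> = \<Union>{Q\<in>dyadic_cubes. \<eta> < osc Q}"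
proof -
  have "x \<in> E \<eta> \<longleftrightarrow> (\<exists>Q\<in>dyadic_cubes. x \<in> Q \<and> \<eta> < osc Q)" for x
  proof -
    have "x \<in> E \<eta> \<longleftrightarrow> (\<exists>Q\<in>{Q\<in>dyadic_cubes. x \<in> Q}. ennreal \<eta> < ennreal (osc Q))"
      unfolding E_def sharp_max_dyadic_def by (simp add: less_SUP_iff)
    also have "\<dots> \<longleftrightarrow> (\<exists>Q\<in>dyadic_cubes. x \<in> Q \<and> \<eta> < osc Q)"
      using assms by (auto simp: ennreal_less_iff)
    finally show ?thesis .
  qed
  then show ?thesis by blast
qed

lemma E_sets[measurable]:
  assumes "0 \<le> \<eta>" shows "E \<eta> \<in> sets lebesgue"
proof -
  have c: "countable {Q\<in>dyadic_cubes. \<eta> < osc Q}"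
    by (rule countable_subset[OF _ countable_dcubes]) auto
  show ?thesis unfolding E_eq[OF assms]
    by (rule sets.countable_Union[OF c]) (auto intro: dcube_sets)
qed

lemma osc_le_notin_E:
  assumes "0 \<le> \<eta>" "x \<notin> E \<eta>" "Q \<in> dyadic_cubes" "x \<in> Q" shows "osc Q \<le> \<eta>"
  using assms E_eq[OF assms(1)] by (auto simp: not_less)

lemma cube_sub_E:
  assumes "0 \<le> \<eta>" "Q \<in> dyadic_cubes" "\<eta> < osc Q" shows "Q \<subseteq> E \<eta>"
  using assms E_eq[OF assms(1)] by blast

lemma E_anti: "0 \<le> \<eta> \<Longrightarrow> \<eta> \<le> \<eta>' \<Longrightarrow> E \<eta>' \<subseteq> E \<eta>"
  using E_eq[of \<eta>] E_eq[of \<eta>'] by auto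

definition Lc :: real where "Lc = (2 ^ (CARD('n) + 1) + 1) powr (1 / \<delta>)"

lemma base_pos: "(0::real) < 2 ^ (CARD('n) + 1) + 1"
  by (metis add_pos_pos zero_less_one zero_less_numeral zero_less_power)

lemma Lc_pos: "0 < Lc" using base_pos unfolding Lc_def by simp

lemma Lc_powr: "(Lc * \<eta>) powr \<delta> = (2 ^ (CARD('n) + 1) + 1) * \<eta> powr \<delta>" if "0 \<le> \<eta>"
  using that d0 base_pos by (simp add: Lc_def powr_mult powr_powr)

lemma drift_L:
  assumes "0 < \<eta>" "\<bar>a\<bar> powr \<delta> \<le> (2 ^ (CARD('n) + 1) + 1) * \<eta> powr \<delta>"
  shows "\<bar>a\<bar> \<le> Lc * \<eta>"
  using powr_le_cancel_base[OF d0, of "\<bar>a\<bar>" "Lc * \<eta>"] assms Lc_powr[of \<eta>] Lc_pos by simp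

end

locale jn = sharp f \<delta> for f :: "real^'n::finite \<Rightarrow> real" and \<delta> +
  fixes P :: "(real^'n) set" and \<eta> :: real
  assumes P: "P \<in> dyadic_cubes" and eta: "0 < \<eta>" and oscP: "osc P \<le> \<eta>"
begin

definition Bset where "Bset = {R\<in>dyadic_cubes. R \<subseteq> P \<and> \<eta> < osc R}"
definition MB where "MB = maxel Bset"
definition Xg where "Xg = P - \<Union>Bset"
definition good where "good Q \<longleftrightarrow> Q \<in> dyadic_cubes \<and> Q \<subseteq> P \<and> (\<forall>Q'\<in>dyadic_cubes. Q \<subseteq> Q' \<longrightarrow> Q' \<subseteq> P \<longrightarrow> osc Q' \<le> \<eta>)"
definition Bad where "Bad Q t = {x\<in>Xg \<inter> Q. t < \<bar>f x - avg Q\<bar>} \<union> \<Union>{R\<in>MB. R \<subseteq> Q \<and> t < \<bar>avg (par R) - avg Q\<bar>}"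
definition t0 where "t0 = 4 powr (1/\<delta>) * \<eta>"

lemma Bset_d: "Bset \<subseteq> dyadic_cubes" by (auto simp: Bset_def)
lemma Bset_c: "countable Bset" using countable_subset[OF Bset_d countable_dcubes] .
lemma MB_d: "MB \<subseteq> dyadic_cubes" using Bset_d maxel_sub by (auto simp: MB_def)
lemma MB_c: "countable MB" using maxel_countable[OF Bset_d] by (simp add: MB_def)

lemma Xg_sets[measurable]: "Xg \<in> sets lebesgue"
proof -
  have "\<Union>Bset \<in> sets lebesgue" by (rule sets.countable_Union[OF Bset_c]) (use Bset_d dcube_sets in auto)
  then show ?thesis unfolding Xg_def using dcube_sets[OF P] by auto
qed

lemma Xg_osc: "x \<in> Xg \<Longrightarrow> Q' \<in> dyadic_cubes \<Longrightarrow> x \<in> Q' \<Longrightarrow> Q' \<subseteq> P \<Longrightarrow> osc Q' \<le> \<eta>"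
  unfolding Xg_def Bset_def by (auto simp: not_less)

lemma good_osc: "good Q \<Longrightarrow> osc Q \<le> \<eta>" unfolding good_def by auto

lemma good_of_Xg: "x \<in> Xg \<Longrightarrow> S \<in> dyadic_cubes \<Longrightarrow> x \<in> S \<Longrightarrow> S \<subseteq> P \<Longrightarrow> good S"
  unfolding good_def using Xg_osc by blast

lemma good_P: "good P"
  unfolding good_def using P oscP by auto

lemma MB_props:
  assumes R: "R \<in> MB"
  shows "R \<in> dyadic_cubes" "R \<subseteq> P" "\<eta> < osc R" "par R \<subseteq> P" "good (par R)"
proof -
  have RB: "R \<in> Bset" using R maxel_sub by (auto simp: MB_def)
  show Rd: "R \<in> dyadic_cubes" and RP: "R \<subseteq> P" and Ro: "\<eta> < osc R" using RB by (auto simp: Bset_def)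
  have "R \<noteq> P" using Ro oscP by auto
  then have "R \<subset> P" using RP by auto
  then show pP: "par R \<subseteq> P" using par_least[OF Rd P] by simp
  show "good (par R)" unfolding good_def
  proof (intro conjI ballI impI)
    show "par R \<in> dyadic_cubes" using par_props(1)[OF Rd] .
    show "par R \<subseteq> P" using pP .
    fix Q' assume Q'd: "Q' \<in> dyadic_cubes" and pQ': "par R \<subseteq> Q'" and Q'P: "Q' \<subseteq> P"
    show "osc Q' \<le> \<eta>"
    proof (rule ccontr)
      assume "\<not> osc Q' \<le> \<eta>"
      then have "Q' \<in> Bset" using Q'd Q'P by (auto simp: Bset_def)
      moreover have "R \<subseteq> Q'" using par_props(2)[OF Rd] pQ' by auto
      ultimately have "Q' = R" using R by (auto simp: MB_def maxel_def)
      then show False using par_props(2,4)[OF Rd] pQ' by auto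
    qed
  qed
qed

lemma Bad_sub: "Bad Q t \<subseteq> Q" unfolding Bad_def by auto

lemma Bad_sets[measurable]:
  assumes Q: "Q \<in> dyadic_cubes" shows "Bad Q t \<in> sets lebesgue"
proof -
  have Qm[measurable]: "Q \<in> sets lebesgue" using dcube_sets[OF Q] .
  have c: "countable {R\<in>MB. R \<subseteq> Q \<and> t < \<bar>avg (par R) - avg Q\<bar>}"
    by (rule countable_subset[OF _ MB_c]) auto
  have "\<Union>{R\<in>MB. R \<subseteq> Q \<and> t < \<bar>avg (par R) - avg Q\<bar>} \<in> sets lebesgue"
    by (rule sets.countable_Union[OF c]) (use MB_d dcube_sets in auto)
  moreover have "{x\<in>Xg \<inter> Q. t < \<bar>f x - avg Q\<bar>} \<in> sets lebesgue" by measurable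
  ultimately show ?thesis unfolding Bad_def by auto
qed

end

context jn begin

lemma eta_pow: "0 < \<eta> powr \<delta>" using eta by simp

lemma near:
  assumes S: "S \<in> dyadic_cubes" and o: "osc S \<le> \<eta>" and a: "0 \<le> a" "a \<le> 2 ^ (CARD('n) + 1)"
    and J: "J S c \<le> ennreal (a * \<eta> powr \<delta> * measure lebesgue S)"
  shows "\<bar>avg S - c\<bar> \<le> Lc * \<eta>"
proof -
  have "\<bar>avg S - c\<bar> powr \<delta> \<le> \<eta> powr \<delta> + a * \<eta> powr \<delta>"
    by (rule drift_bound[OF S]) (use osc_le_J[OF S o] J eta a in \<open>auto simp: mult.assoc\<close>)
  also have "\<dots> \<le> (2 ^ (CARD('n) + 1) + 1) * \<eta> powr \<delta>"
    using a eta_pow by (simp add: algebra_simps mult_right_mono)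
  finally show ?thesis using drift_L eta by blast
qed

lemma t0_pow: "t0 powr \<delta> = 4 * \<eta> powr \<delta>"
  using d0 eta by (simp add: t0_def powr_mult powr_powr)

lemma t0_pos: "0 < t0" using eta by (simp add: t0_def)

lemma JN_step:
  assumes IH: "\<And>Q. good Q \<Longrightarrow> emeasure lebesgue (Bad Q t) \<le> ennreal r * emeasure lebesgue Q"
    and t: "t0 \<le> t" and r: "0 \<le> r" and Qg: "good Q"
  shows "emeasure lebesgue (Bad Q (t + Lc * \<eta>)) \<le> ennreal (r / 2) * emeasure lebesgue Q"
proof -
  define c where "c = avg Q"
  have Qd: "Q \<in> dyadic_cubes" and QP: "Q \<subseteq> P" and oQ: "osc Q \<le> \<eta>" using Qg by (auto simp: good_def)
  have Qm[measurable]: "Q \<in> sets lebesgue" using dcube_sets[OF Qd] .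
  define St where "St = {S\<in>dyadic_cubes. good S \<and> S \<subseteq> Q \<and> ennreal (2 * \<eta> powr \<delta> * measure lebesgue S) < J S c}"
  define Smax where "Smax = maxel St"
  have Std: "St \<subseteq> dyadic_cubes" by (auto simp: St_def)
  have Stb: "\<And>S. S \<in> St \<Longrightarrow> lv S \<le> lv Q" using Qd by (auto simp: St_def intro: dcube_subset_lv)
  have Sm_St: "Smax \<subseteq> St" by (simp add: Smax_def maxel_sub)
  have Smd: "\<And>S. S \<in> Smax \<Longrightarrow> S \<in> dyadic_cubes" using Sm_St Std by blast
  have Smc: "countable Smax" using maxel_countable[OF Std] by (simp add: Smax_def)
  have Smdisj: "disjoint_family_on (\<lambda>S. S) Smax" using maxel_disjoint_family[OF Std] by (simp add: Smax_def)
  have SmQ: "\<And>S. S \<in> Smax \<Longrightarrow> S \<subseteq> Q" using Sm_St by (auto simp: St_def)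
  have USm[measurable]: "\<Union>Smax \<in> sets lebesgue"
    by (rule sets.countable_Union[OF Smc]) (use Smd dcube_sets in auto)
  have JQ: "J Q c \<le> ennreal (\<eta> powr \<delta> * measure lebesgue Q)" using osc_le_J[OF Qd oQ] by (simp add: c_def)
  have nonstop: "\<bar>avg S - c\<bar> \<le> Lc * \<eta>" if Sg: "good S" and SQ: "S \<subseteq> Q" and nS: "S \<notin> St" for S
  proof -
    have Sd: "S \<in> dyadic_cubes" using Sg by (simp add: good_def)
    have "J S c \<le> ennreal (2 * \<eta> powr \<delta> * measure lebesgue S)" using nS Sd Sg SQ by (auto simp: St_def not_less)
    then show ?thesis by (intro near[OF Sd good_osc[OF Sg], of 2]) auto
  qed
  have stopnear: "\<bar>avg S - c\<bar> \<le> Lc * \<eta>" if S: "S \<in> Smax" for S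
  proof -
    have SSt: "S \<in> St" using S Sm_St by blast
    have Sd: "S \<in> dyadic_cubes" and Sg: "good S" and SQ: "S \<subseteq> Q" using SSt by (auto simp: St_def)
    have "S \<noteq> Q"
    proof
      assume "S = Q"
      then have "ennreal (2 * \<eta> powr \<delta> * measure lebesgue Q) < J Q c" using SSt by (simp add: St_def)
      moreover have "ennreal (\<eta> powr \<delta> * measure lebesgue Q) \<le> ennreal (2 * \<eta> powr \<delta> * measure lebesgue Q)"
        using eta_pow dcube_measure_pos[OF Qd] by (intro ennreal_leI) simp
      ultimately show False using JQ by (meson leD order_trans)
    qed
    then have pQ: "par S \<subseteq> Q" using par_least[OF Sd Qd] SQ by auto
    have pd: "par S \<in> dyadic_cubes" using par_props(1)[OF Sd] .
    have pg: "good (par S)" unfolding good_def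
    proof (intro conjI ballI impI)
      show "par S \<in> dyadic_cubes" "par S \<subseteq> P" using pd pQ QP by auto
      fix Q' assume "Q' \<in> dyadic_cubes" "par S \<subseteq> Q'" "Q' \<subseteq> P"
      then show "osc Q' \<le> \<eta>" using Sg par_props(2)[OF Sd] unfolding good_def by blast
    qed
    have npS: "par S \<notin> St"
    proof
      assume "par S \<in> St"
      then have "par S = S" using S par_props(2)[OF Sd] by (auto simp: Smax_def maxel_def)
      then show False using par_props(4)[OF Sd] by simp
    qed
    have Jp: "J (par S) c \<le> ennreal (2 * \<eta> powr \<delta> * measure lebesgue (par S))"
      using npS pd pg pQ by (auto simp: St_def not_less)
    have "J S c \<le> J (par S) c" using par_props(2)[OF Sd] dcube_sets[OF pd] by (rule J_mono)
    also have "\<dots> \<le> ennreal (2 * \<eta> powr \<delta> * measure lebesgue (par S))" using Jp .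
    also have "\<dots> = ennreal (2 ^ (CARD('n) + 1) * \<eta> powr \<delta> * measure lebesgue S)"
      using par_props(5)[OF Sd] by (simp add: algebra_simps)
    finally show ?thesis by (intro near[OF Sd good_osc[OF Sg], of "2 ^ (CARD('n) + 1)"]) auto
  qed
  have sumS: "emeasure lebesgue (\<Union>Smax) \<le> ennreal (measure lebesgue Q / 2)"
  proof -
    define u where "u = measure lebesgue (\<Union>Smax)"
    have Usub: "\<Union>Smax \<subseteq> Q" using SmQ by blast
    have ufin: "emeasure lebesgue (\<Union>Smax) = ennreal u"
    proof -
      have "emeasure lebesgue (\<Union>Smax) \<le> emeasure lebesgue Q" using Usub by (intro emeasure_mono) auto
      then have "emeasure lebesgue (\<Union>Smax) \<noteq> \<infinity>" using dcube_emeasure_fin[OF Qd] by (auto simp: top_unique)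
      then show ?thesis by (simp add: u_def emeasure_eq_ennreal_measure)
    qed
    have each: "ennreal (2 * \<eta> powr \<delta>) * emeasure lebesgue S \<le> J S c" if S: "S \<in> Smax" for S
    proof -
      have "emeasure lebesgue S = ennreal (measure lebesgue S)" using dcube_emeasure[OF Smd[OF S]] dcube_measure[OF Smd[OF S]] by (simp del: emeasure_completion)
      moreover have "ennreal (2 * \<eta> powr \<delta> * measure lebesgue S) < J S c" using S Sm_St by (auto simp: St_def)
      ultimately show ?thesis using eta_pow by (simp add: ennreal_mult less_imp_le)
    qed
    have "ennreal (2 * \<eta> powr \<delta>) * emeasure lebesgue (\<Union>Smax) = ennreal (2 * \<eta> powr \<delta>) * (\<integral>\<^sup>+S. emeasure lebesgue S \<partial>count_space Smax)"
      using emeasure_UN_countable[of Smax "\<lambda>S. S" lebesgue] Smc Smdisj Smd dcube_sets by simp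
    also have "\<dots> = (\<integral>\<^sup>+S. ennreal (2 * \<eta> powr \<delta>) * emeasure lebesgue S \<partial>count_space Smax)"
      by (rule nn_integral_cmult[symmetric]) auto
    also have "\<dots> \<le> (\<integral>\<^sup>+S. J S c \<partial>count_space Smax)"
      by (rule nn_integral_mono) (use each in auto)
    also have "\<dots> = J (\<Union>Smax) c" using J_UN[OF Smc _ Smdisj] Smd by (metis subsetI)
    also have "\<dots> \<le> J Q c" using Usub by (rule J_mono) simp
    also have "\<dots> \<le> ennreal (\<eta> powr \<delta> * measure lebesgue Q)" using JQ .
    finally have "ennreal (2 * \<eta> powr \<delta> * u) \<le> ennreal (\<eta> powr \<delta> * measure lebesgue Q)"
      using ufin eta_pow by (simp add: ennreal_mult u_def)
    then have "2 * \<eta> powr \<delta> * u \<le> \<eta> powr \<delta> * measure lebesgue Q"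
      using eta_pow by (subst (asm) ennreal_le_iff) auto
    then have "u \<le> measure lebesgue Q / 2" using eta_pow by (simp add: algebra_simps)
    then show ?thesis using ufin by (simp add: ennreal_leI)
  qed
  define N where "N = {x\<in>Xg \<inter> Q. x \<notin> \<Union>Smax \<and> t0 < \<bar>f x - c\<bar>}"
  have Nm[measurable]: "N \<in> sets lebesgue" unfolding N_def by measurable
  have Nnull: "emeasure lebesgue N = 0"
  proof (rule density_null[OF Qd _ Nm, of "1/2"])
    show "N \<subseteq> Q" by (auto simp: N_def)
    show "(1/2::real) < 1" by simp
    fix S assume Sd: "S \<in> dyadic_cubes" and SQ: "S \<subseteq> Q"
    show "emeasure lebesgue (S \<inter> N) \<le> ennreal (1/2) * emeasure lebesgue S"
    proof (cases "S \<inter> N = {}")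
      case True then show ?thesis by simp
    next
      case False
      then obtain x where xS: "x \<in> S" and xN: "x \<in> N" by blast
      have Sg: "good S" using good_of_Xg[of x S] xN xS Sd SQ QP by (auto simp: N_def)
      have nS: "S \<notin> St"
      proof
        assume "S \<in> St"
        then obtain T where "T \<in> maxel St" "S \<subseteq> T" using maxel_exists[OF Std _ Stb] by blast
        then show False using xS xN by (auto simp: N_def Smax_def)
      qed
      have JS: "J S c \<le> ennreal (2 * \<eta> powr \<delta> * measure lebesgue S)" using nS Sd Sg SQ by (auto simp: St_def not_less)
      define e where "e = measure lebesgue (S \<inter> {x. t0 < \<bar>f x - c\<bar>})"
      have Sm[measurable]: "S \<in> sets lebesgue" using dcube_sets[OF Sd] .
      have efin: "emeasure lebesgue (S \<inter> {x. t0 < \<bar>f x - c\<bar>}) = ennreal e"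
      proof -
        have "emeasure lebesgue (S \<inter> {x. t0 < \<bar>f x - c\<bar>}) \<le> emeasure lebesgue S" by (intro emeasure_mono) auto
        then have "emeasure lebesgue (S \<inter> {x. t0 < \<bar>f x - c\<bar>}) \<noteq> \<infinity>" using dcube_emeasure_fin[OF Sd] by (auto simp: top_unique)
        then show ?thesis by (simp add: e_def emeasure_eq_ennreal_measure)
      qed
      have e0: "0 \<le> e" by (simp add: e_def)
      have "ennreal (4 * \<eta> powr \<delta> * e) = ennreal (t0 powr \<delta>) * ennreal e"
        using t0_pow eta_pow e0 by (simp add: ennreal_mult)
      also have "\<dots> = ennreal (t0 powr \<delta>) * emeasure lebesgue (S \<inter> {x. t0 < \<bar>f x - c\<bar>})"
        using efin by (simp del: emeasure_completion)
      also have "\<dots> \<le> J S c" by (rule J_cheb[OF Sm t0_pos])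
      also have "\<dots> \<le> ennreal (2 * \<eta> powr \<delta> * measure lebesgue S)" by (rule JS)
      finally have "ennreal (4 * \<eta> powr \<delta> * e) \<le> ennreal (2 * \<eta> powr \<delta> * measure lebesgue S)" .
      then have "4 * \<eta> powr \<delta> * e \<le> 2 * \<eta> powr \<delta> * measure lebesgue S"
        using eta_pow by (subst (asm) ennreal_le_iff) auto
      then have e2: "e \<le> measure lebesgue S / 2" using eta_pow by (simp add: algebra_simps)
      have "emeasure lebesgue (S \<inter> N) \<le> emeasure lebesgue (S \<inter> {x. t0 < \<bar>f x - c\<bar>})"
        by (intro emeasure_mono) (auto simp: N_def)
      also have "\<dots> \<le> ennreal (measure lebesgue S / 2)" using efin e2 by (simp add: ennreal_leI)
      also have "\<dots> = ennreal (1/2 * measure lebesgue S)" by simp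
      also have "\<dots> = ennreal (1/2) * ennreal (measure lebesgue S)" by (rule ennreal_mult) auto
      also have "\<dots> = ennreal (1/2) * emeasure lebesgue S"
        using dcube_emeasure[OF Sd] dcube_measure[OF Sd] by (simp del: emeasure_completion)
      finally show ?thesis .
    qed
  qed
  have incl: "Bad Q (t + Lc * \<eta>) \<subseteq> N \<union> (\<Union>S\<in>Smax. Bad S t)"
  proof
    fix x assume xB: "x \<in> Bad Q (t + Lc * \<eta>)"
    have L0: "0 \<le> Lc * \<eta>" using Lc_pos eta by simp
    show "x \<in> N \<union> (\<Union>S\<in>Smax. Bad S t)"
    proof (cases "x \<in> {x\<in>Xg \<inter> Q. t + Lc * \<eta> < \<bar>f x - avg Q\<bar>}")
      case True
      show ?thesis
      proof (cases "x \<in> \<Union>Smax")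
        case True
        then obtain S where S: "S \<in> Smax" "x \<in> S" by blast
        have "t < \<bar>f x - avg S\<bar>" using stopnear[OF S(1)] \<open>x \<in> {x\<in>Xg \<inter> Q. t + Lc * \<eta> < \<bar>f x - avg Q\<bar>}\<close>
          by (simp add: c_def) linarith
        then have "x \<in> Bad S t" using S \<open>x \<in> {x\<in>Xg \<inter> Q. t + Lc * \<eta> < \<bar>f x - avg Q\<bar>}\<close> by (auto simp: Bad_def)
        then show ?thesis using S by blast
      next
        case False
        then have "x \<in> N" using \<open>x \<in> {x\<in>Xg \<inter> Q. t + Lc * \<eta> < \<bar>f x - avg Q\<bar>}\<close> t L0 by (auto simp: N_def c_def)
        then show ?thesis by blast
      qed
    next
      case False
      then obtain R where R: "R \<in> MB" "R \<subseteq> Q" "t + Lc * \<eta> < \<bar>avg (par R) - avg Q\<bar>" "x \<in> R"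
        using xB unfolding Bad_def by blast
      have Rd: "R \<in> dyadic_cubes" using MB_props(1)[OF R(1)] .
      have pg: "good (par R)" using MB_props(5)[OF R(1)] .
      have "R \<noteq> Q" using MB_props(3)[OF R(1)] oQ by auto
      then have pQ: "par R \<subseteq> Q" using par_least[OF Rd Qd] R(2) by auto
      show ?thesis
      proof (cases "\<exists>S\<in>Smax. par R \<subseteq> S")
        case True
        then obtain S where S: "S \<in> Smax" "par R \<subseteq> S" by blast
        have RS: "R \<subseteq> S" using S(2) par_props(2)[OF Rd] by auto
        have "t < \<bar>avg (par R) - avg S\<bar>" using stopnear[OF S(1)] R(3) unfolding c_def by linarith
        then have "x \<in> Bad S t" using R RS by (auto simp: Bad_def)
        then show ?thesis using S by blast
      next
        case False
        have "par R \<notin> St"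
        proof
          assume "par R \<in> St"
          then obtain T where "T \<in> maxel St" "par R \<subseteq> T" using maxel_exists[OF Std _ Stb] by blast
          then show False using False by (auto simp: Smax_def)
        qed
        then have "\<bar>avg (par R) - c\<bar> \<le> Lc * \<eta>" using nonstop[OF pg pQ] by blast
        then have False using R(3) t t0_pos by (simp add: c_def)
        then show ?thesis ..
      qed
    qed
  qed
  have Bm: "\<And>S. S \<in> Smax \<Longrightarrow> Bad S t \<in> sets lebesgue" using Smd Bad_sets by blast
  have dB: "disjoint_family_on (\<lambda>S. Bad S t) Smax"
    using Smdisj Bad_sub unfolding disjoint_family_on_def by blast
  have "emeasure lebesgue (Bad Q (t + Lc * \<eta>)) \<le> emeasure lebesgue (N \<union> (\<Union>S\<in>Smax. Bad S t))"
    using incl Bm Smc by (intro emeasure_mono) (auto intro!: sets.countable_UN'')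
  also have "\<dots> \<le> emeasure lebesgue N + emeasure lebesgue (\<Union>S\<in>Smax. Bad S t)"
    by (rule emeasure_subadditive) (use Bm Smc in \<open>auto intro!: sets.countable_UN''\<close>)
  also have "\<dots> = emeasure lebesgue (\<Union>S\<in>Smax. Bad S t)" using Nnull by simp
  also have "\<dots> = (\<integral>\<^sup>+S. emeasure lebesgue (Bad S t) \<partial>count_space Smax)"
    by (rule emeasure_UN_countable[OF Bm Smc dB])
  also have "\<dots> \<le> (\<integral>\<^sup>+S. ennreal r * emeasure lebesgue S \<partial>count_space Smax)"
    by (rule nn_integral_mono) (use IH Sm_St in \<open>auto simp: St_def\<close>)
  also have "\<dots> = ennreal r * (\<integral>\<^sup>+S. emeasure lebesgue S \<partial>count_space Smax)"
    by (rule nn_integral_cmult) auto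
  also have "(\<integral>\<^sup>+S. emeasure lebesgue S \<partial>count_space Smax) = emeasure lebesgue (\<Union>Smax)"
    using emeasure_UN_countable[of Smax "\<lambda>S. S" lebesgue] Smc Smdisj Smd dcube_sets by simp
  also have "ennreal r * emeasure lebesgue (\<Union>Smax) \<le> ennreal r * ennreal (measure lebesgue Q / 2)"
    using sumS by (rule mult_left_mono) simp
  also have "\<dots> = ennreal (r * (measure lebesgue Q / 2))" by (rule ennreal_mult[symmetric]) (use r in auto)
  also have "\<dots> = ennreal (r / 2 * measure lebesgue Q)" by simp
  also have "\<dots> = ennreal (r / 2) * ennreal (measure lebesgue Q)" using r by (intro ennreal_mult) auto
  also have "\<dots> = ennreal (r / 2) * emeasure lebesgue Q"
    using dcube_emeasure[OF Qd] dcube_measure[OF Qd] by (simp del: emeasure_completion)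
  finally show ?thesis .
qed

end

context jn begin

lemma JN:
  "good Q \<Longrightarrow> emeasure lebesgue (Bad Q (t0 + real j * Lc * \<eta>)) \<le> ennreal ((1/2) ^ j) * emeasure lebesgue Q"
proof (induction j arbitrary: Q)
  case 0
  have Qd: "Q \<in> dyadic_cubes" using 0 by (simp add: good_def)
  have "emeasure lebesgue (Bad Q (t0 + real 0 * Lc * \<eta>)) \<le> emeasure lebesgue Q"
    using Bad_sub dcube_sets[OF Qd] by (intro emeasure_mono)
  then show ?case by simp
next
  case (Suc j)
  have t: "t0 \<le> t0 + real j * Lc * \<eta>" using Lc_pos eta by simp
  have r: "0 \<le> (1/2::real) ^ j" by simp
  have A: "emeasure lebesgue (Bad Q ((t0 + real j * Lc * \<eta>) + Lc * \<eta>)) \<le> ennreal ((1/2) ^ j / 2) * emeasure lebesgue Q"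
    by (rule JN_step[OF Suc.IH t r Suc.prems])
  have B: "(t0 + real j * Lc * \<eta>) + Lc * \<eta> = t0 + real (Suc j) * Lc * \<eta>" by (simp add: algebra_simps)
  have C: "(1/2::real) ^ j / 2 = (1/2) ^ Suc j" by simp
  show ?case using A unfolding B C .
qed

end

locale lev = sharp f \<delta> for f :: "real^'n::finite \<Rightarrow> real" and \<delta> +
  fixes Sv \<theta> :: real and q :: nat
  assumes Sv: "0 < Sv" and th: "0 < \<theta>"
begin

definition et :: "nat \<Rightarrow> real" where "et k = \<theta> * Sv / 2 ^ k"
definition tau :: "nat \<Rightarrow> real" where "tau k = 4 powr (1/\<delta>) * et k + real ((k+1)*q) * Lc * et k"
definition sig :: "nat \<Rightarrow> real" where "sig k = (\<Sum>i\<le>k. tau i) + 4 * Lc * \<theta> * Sv - 2 * Lc * et k"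
definition rho :: "nat \<Rightarrow> real" where "rho k = (1/2) ^ ((k+1)*q)"
definition EE :: "nat \<Rightarrow> (real^'n) set" where "EE k = E (et k)"

lemma et_pos: "0 < et k" using Sv th by (simp add: et_def)
lemma et_Suc: "et (Suc k) = et k / 2" by (simp add: et_def)
lemma et_anti: "i \<le> k \<Longrightarrow> et k \<le> et i"
  using Sv th by (simp add: et_def divide_left_mono)
lemma et_0: "et 0 = \<theta> * Sv" by (simp add: et_def)
lemma tau_nonneg: "0 \<le> tau k"
proof -
  have "0 \<le> 4 powr (1/\<delta>) * et k" using et_pos[of k] by simp
  moreover have "0 \<le> real ((k+1)*q) * Lc * et k" using et_pos[of k] Lc_pos by simp
  ultimately show ?thesis unfolding tau_def by linarith
qed
lemma EE_sets[measurable]: "EE k \<in> sets lebesgue" using et_pos by (simp add: EE_def less_imp_le)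

lemma sig_ge_tau: "tau k \<le> sig k"
proof -
  have "tau k \<le> (\<Sum>i\<le>k. tau i)" by (rule member_le_sum) (auto intro: tau_nonneg)
  moreover have "2 * Lc * et k \<le> 4 * Lc * \<theta> * Sv"
  proof -
    have a: "et k \<le> \<theta> * Sv" using et_anti[of 0 k] et_0 by simp
    have b: "Lc * et k \<le> Lc * (\<theta> * Sv)" using a Lc_pos by (simp add: mult_left_mono)
    have c: "0 \<le> Lc * (\<theta> * Sv)" using Lc_pos Sv th by simp
    show ?thesis using b c by (simp add: algebra_simps)
  qed
  ultimately show ?thesis unfolding sig_def by linarith
qed

lemma sig_gap:
  assumes "j < k" shows "sig j + Lc * et j + tau k \<le> sig k"
proof -
  have s1: "(\<Sum>i\<le>j. tau i) + tau k \<le> (\<Sum>i\<le>k. tau i)"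
  proof -
    have "(\<Sum>i\<le>j. tau i) + tau k = (\<Sum>i\<in>insert k {..j}. tau i)" using assms by simp
    also have "\<dots> \<le> (\<Sum>i\<le>k. tau i)" by (rule sum_mono2) (use assms tau_nonneg in auto)
    finally show ?thesis .
  qed
  have "et k \<le> et (Suc j)" using et_anti assms by simp
  then have "Lc * et k \<le> Lc * (et j / 2)" using Lc_pos by (simp add: et_Suc mult_left_mono)
  then have "2 * Lc * et k \<le> Lc * et j" by (simp add: algebra_simps)
  then show ?thesis using s1 unfolding sig_def by linarith
qed

end

context lev begin

lemma level_exists:
  assumes "et k < osc R" "osc R \<le> et 0"
  shows "\<exists>j<k. et (Suc j) < osc R \<and> osc R \<le> et j"
proof -
  define l where "l = (LEAST i. et i < osc R)"
  have l1: "et l < osc R" unfolding l_def by (rule LeastI[of _ k]) (rule assms(1))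
  have l2: "l \<le> k" unfolding l_def by (rule Least_le) (rule assms(1))
  have l0: "l \<noteq> 0"
  proof
    assume "l = 0" then show False using l1 assms(2) by simp
  qed
  then obtain j where j: "l = Suc j" by (cases l) auto
  have "\<not> et j < osc R" using not_less_Least[of j "\<lambda>i. et i < osc R"] j unfolding l_def by simp
  then show ?thesis using j l1 l2 by (intro exI[of _ j]) auto
qed

lemma claim:
  "P \<in> dyadic_cubes \<Longrightarrow> osc P \<le> et k \<Longrightarrow>
    emeasure lebesgue {x\<in>P - EE 0. sig k < \<bar>f x - avg P\<bar>}
      \<le> ennreal (rho k) * emeasure lebesgue P + (\<Sum>i<k. ennreal (rho i) * emeasure lebesgue (EE (Suc i) \<inter> P))"
proof (induction k arbitrary: P rule: less_induct)
  case (less k P)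
  note Pd = less.prems(1) and oP = less.prems(2)
  interpret J: jn f \<delta> P "et k"
    by unfold_locales (use Pd oP et_pos in auto)
  have Pm[measurable]: "P \<in> sets lebesgue" using dcube_sets[OF Pd] .
  define T where "T = {x\<in>P - EE 0. sig k < \<bar>f x - avg P\<bar>}"
  define MB' where "MB' = {R\<in>J.MB. osc R \<le> et 0}"
  have MB'd: "\<And>R. R \<in> MB' \<Longrightarrow> R \<in> dyadic_cubes" using J.MB_d by (auto simp: MB'_def)
  have MB'c: "countable MB'" using countable_subset[OF _ J.MB_c] by (auto simp: MB'_def)
  have MB'disj: "disjoint_family_on (\<lambda>R. R) MB'"
    using maxel_disjoint_family[OF J.Bset_d] by (auto simp: MB'_def J.MB_def disjoint_family_on_def)
  define lvl where "lvl R = (SOME j. j < k \<and> et (Suc j) < osc R \<and> osc R \<le> et j)" for R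
  have lvl: "lvl R < k \<and> et (Suc (lvl R)) < osc R \<and> osc R \<le> et (lvl R)" if R: "R \<in> MB'" for R
  proof -
    have "et k < osc R" using J.MB_props(3) R by (auto simp: MB'_def)
    moreover have "osc R \<le> et 0" using R by (auto simp: MB'_def)
    ultimately have "\<exists>j. j < k \<and> et (Suc j) < osc R \<and> osc R \<le> et j" using level_exists by blast
    then show ?thesis unfolding lvl_def by (rule someI_ex)
  qed
  define TR where "TR R = {x\<in>R - EE 0. sig (lvl R) < \<bar>f x - avg R\<bar>}" for R
  have TRm: "\<And>R. R \<in> MB' \<Longrightarrow> TR R \<in> sets lebesgue"
  proof -
    fix R assume "R \<in> MB'"
    then have [measurable]: "R \<in> sets lebesgue" using MB'd dcube_sets by blast
    show "TR R \<in> sets lebesgue" unfolding TR_def by measurable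
  qed
  have TRdisj: "disjoint_family_on TR MB'"
    using MB'disj unfolding disjoint_family_on_def TR_def by blast
  have Bm: "J.Bad P (tau k) \<in> sets lebesgue" using J.Bad_sets[OF Pd] .
  have JNb: "emeasure lebesgue (J.Bad P (tau k)) \<le> ennreal (rho k) * emeasure lebesgue P"
  proof -
    have "tau k = J.t0 + real ((k+1)*q) * Lc * et k" by (simp add: tau_def J.t0_def)
    then show ?thesis using J.JN[OF J.good_P, of "(k+1)*q"] by (simp add: rho_def)
  qed
  have incl: "T \<subseteq> J.Bad P (tau k) \<union> (\<Union>R\<in>MB'. TR R)"
  proof
    fix x assume xT: "x \<in> T"
    have xP: "x \<in> P" and xE: "x \<notin> EE 0" and big: "sig k < \<bar>f x - avg P\<bar>" using xT by (auto simp: T_def)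
    show "x \<in> J.Bad P (tau k) \<union> (\<Union>R\<in>MB'. TR R)"
    proof (cases "x \<in> J.Xg")
      case True
      then have "x \<in> J.Bad P (tau k)" using big sig_ge_tau[of k] xP by (auto simp: J.Bad_def)
      then show ?thesis by blast
    next
      case False
      then obtain B where B: "B \<in> J.Bset" "x \<in> B" using xP by (auto simp: J.Xg_def)
      have Bb: "\<And>T. T \<in> J.Bset \<Longrightarrow> lv T \<le> lv P" using Pd by (auto simp: J.Bset_def intro: dcube_subset_lv)
      obtain R where R: "R \<in> J.MB" "B \<subseteq> R" using maxel_exists[OF J.Bset_d B(1) Bb] by (auto simp: J.MB_def)
      have xR: "x \<in> R" using R B by auto
      have Rd: "R \<in> dyadic_cubes" using J.MB_props(1)[OF R(1)] .
      show ?thesis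
      proof (cases "tau k < \<bar>avg (par R) - avg P\<bar>")
        case True
        then have "x \<in> J.Bad P (tau k)" using R xR J.MB_props(2)[OF R(1)] by (auto simp: J.Bad_def)
        then show ?thesis by blast
      next
        case False
        have oR0: "osc R \<le> et 0"
          using osc_le_notin_E[of "et 0" x R] xE Rd xR et_pos by (simp add: EE_def less_imp_le)
        then have RM: "R \<in> MB'" using R(1) by (simp add: MB'_def)
        define j where "j = lvl R"
        have j: "j < k" "et (Suc j) < osc R" "osc R \<le> et j" using lvl[OF RM] by (auto simp: j_def)
        have pd: "par R \<in> dyadic_cubes" using par_props(1)[OF Rd] .
        have opR: "osc (par R) \<le> et k" using J.good_osc[OF J.MB_props(5)[OF R(1)]] .
        have ekj: "et k \<le> et j" using et_anti j(1) by simp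
        have d: "\<bar>avg R - avg (par R)\<bar> \<le> Lc * et j"
        proof -
          have a1: "J R (avg R) \<le> ennreal (et j powr \<delta> * measure lebesgue R)" using osc_le_J[OF Rd j(3)] .
          have "J R (avg (par R)) \<le> J (par R) (avg (par R))"
            using par_props(2)[OF Rd] dcube_sets[OF pd] by (rule J_mono)
          also have "\<dots> \<le> ennreal (et k powr \<delta> * measure lebesgue (par R))" using osc_le_J[OF pd opR] .
          also have "\<dots> \<le> ennreal (2 ^ CARD('n) * et j powr \<delta> * measure lebesgue R)"
          proof (rule ennreal_leI)
            have "et k powr \<delta> \<le> et j powr \<delta>" using ekj et_pos d0 by (intro powr_mono2) (auto simp: less_imp_le)
            then have "et k powr \<delta> * (2 ^ CARD('n) * measure lebesgue R) \<le> et j powr \<delta> * (2 ^ CARD('n) * measure lebesgue R)"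
              by (rule mult_right_mono) simp
            then show "et k powr \<delta> * measure lebesgue (par R) \<le> 2 ^ CARD('n) * et j powr \<delta> * measure lebesgue R"
              using par_props(5)[OF Rd] by (simp add: algebra_simps)
          qed
          finally have a2: "J R (avg (par R)) \<le> ennreal (2 ^ CARD('n) * et j powr \<delta> * measure lebesgue R)" .
          have "\<bar>avg R - avg (par R)\<bar> powr \<delta> \<le> et j powr \<delta> + 2 ^ CARD('n) * et j powr \<delta>"
            by (rule drift_bound[OF Rd _ _ a1]) (use a2 in \<open>auto simp: mult.assoc\<close>)
          also have "\<dots> \<le> (2 ^ (CARD('n) + 1) + 1) * et j powr \<delta>"
            using et_pos[of j] by (simp add: algebra_simps)
          finally show ?thesis using drift_L et_pos by blast
        qed
        have "sig j < \<bar>f x - avg R\<bar>" using sig_gap[OF j(1)] big False d by linarith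
        then have "x \<in> TR R" using xR xE by (simp add: TR_def j_def)
        then show ?thesis using RM by blast
      qed
    qed
  qed
  have perR: "emeasure lebesgue (TR R) \<le> (\<Sum>i<k. ennreal (rho i) * emeasure lebesgue (EE (Suc i) \<inter> R))"
    if R: "R \<in> MB'" for R
  proof -
    define j where "j = lvl R"
    have j: "j < k" "et (Suc j) < osc R" "osc R \<le> et j" using lvl[OF R] by (auto simp: j_def)
    have Rd: "R \<in> dyadic_cubes" using MB'd[OF R] .
    have RE: "R \<subseteq> EE (Suc j)" unfolding EE_def using cube_sub_E[OF _ Rd j(2)] et_pos by (simp add: less_imp_le)
    have "emeasure lebesgue (TR R) \<le> ennreal (rho j) * emeasure lebesgue R + (\<Sum>i<j. ennreal (rho i) * emeasure lebesgue (EE (Suc i) \<inter> R))"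
      unfolding TR_def j_def[symmetric] by (rule less.IH[OF j(1) Rd j(3)])
    also have "emeasure lebesgue R = emeasure lebesgue (EE (Suc j) \<inter> R)" using RE by (simp add: Int_absorb1)
    also have "ennreal (rho j) * emeasure lebesgue (EE (Suc j) \<inter> R) + (\<Sum>i<j. ennreal (rho i) * emeasure lebesgue (EE (Suc i) \<inter> R))
        = (\<Sum>i<Suc j. ennreal (rho i) * emeasure lebesgue (EE (Suc i) \<inter> R))" by (simp add: add.commute)
    also have "\<dots> \<le> (\<Sum>i<k. ennreal (rho i) * emeasure lebesgue (EE (Suc i) \<inter> R))"
      by (rule sum_mono2) (use j(1) in auto)
    finally show ?thesis .
  qed
  have "emeasure lebesgue T \<le> emeasure lebesgue (J.Bad P (tau k) \<union> (\<Union>R\<in>MB'. TR R))"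
    using incl Bm TRm MB'c by (intro emeasure_mono) (auto intro!: sets.countable_UN'')
  also have "\<dots> \<le> emeasure lebesgue (J.Bad P (tau k)) + emeasure lebesgue (\<Union>R\<in>MB'. TR R)"
    using Bm TRm MB'c by (intro emeasure_subadditive) (auto intro!: sets.countable_UN'')
  also have "emeasure lebesgue (\<Union>R\<in>MB'. TR R) = (\<integral>\<^sup>+R. emeasure lebesgue (TR R) \<partial>count_space MB')"
    by (rule emeasure_UN_countable[OF TRm MB'c TRdisj])
  also have "\<dots> \<le> (\<integral>\<^sup>+R. (\<Sum>i<k. ennreal (rho i) * emeasure lebesgue (EE (Suc i) \<inter> R)) \<partial>count_space MB')"
    by (rule nn_integral_mono) (use perR in auto)
  also have "\<dots> = (\<Sum>i<k. \<integral>\<^sup>+R. ennreal (rho i) * emeasure lebesgue (EE (Suc i) \<inter> R) \<partial>count_space MB')"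
    by (rule nn_integral_sum) auto
  also have "\<dots> = (\<Sum>i<k. ennreal (rho i) * (\<integral>\<^sup>+R. emeasure lebesgue (EE (Suc i) \<inter> R) \<partial>count_space MB'))"
    by (intro sum.cong refl nn_integral_cmult) auto
  also have "\<dots> \<le> (\<Sum>i<k. ennreal (rho i) * emeasure lebesgue (EE (Suc i) \<inter> P))"
  proof (rule sum_mono)
    fix i
    have "(\<integral>\<^sup>+R. emeasure lebesgue (EE (Suc i) \<inter> R) \<partial>count_space MB') = emeasure lebesgue (\<Union>R\<in>MB'. EE (Suc i) \<inter> R)"
      by (rule emeasure_UN_countable[symmetric]) (use MB'c MB'disj MB'd dcube_sets in \<open>auto simp: disjoint_family_on_def\<close>)
    also have "\<dots> \<le> emeasure lebesgue (EE (Suc i) \<inter> P)"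
      using J.MB_props(2) by (intro emeasure_mono) (auto simp: MB'_def)
    finally show "ennreal (rho i) * (\<integral>\<^sup>+R. emeasure lebesgue (EE (Suc i) \<inter> R) \<partial>count_space MB') \<le> ennreal (rho i) * emeasure lebesgue (EE (Suc i) \<inter> P)"
      by (rule mult_left_mono) simp
  qed
  finally have "emeasure lebesgue T \<le> emeasure lebesgue (J.Bad P (tau k)) + (\<Sum>i<k. ennreal (rho i) * emeasure lebesgue (EE (Suc i) \<inter> P))"
    by (simp add: add_left_mono)
  also have "\<dots> \<le> ennreal (rho k) * emeasure lebesgue P + (\<Sum>i<k. ennreal (rho i) * emeasure lebesgue (EE (Suc i) \<inter> P))"
    using JNb by (rule add_right_mono)
  finally show ?case by (simp add: T_def)
qed

end

lemma geom_sum: "(\<Sum>i\<le>K. (1/2::real) ^ i) = 2 - (1/2) ^ K"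
  by (induction K) (auto simp: algebra_simps)

lemma geom_sum2: "(\<Sum>i\<le>K. real (i+1) * (1/2::real) ^ i) = 4 - real (K+3) * (1/2) ^ K"
proof (induction K)
  case 0 then show ?case by simp
next
  case (Suc K)
  have "(\<Sum>i\<le>Suc K. real (i+1) * (1/2::real) ^ i) = (4 - real (K+3) * (1/2) ^ K) + real (K+2) * (1/2) ^ Suc K"
    using Suc by simp
  also have "\<dots> = 4 - real (Suc K + 3) * (1/2) ^ Suc K" by (simp add: field_simps)
  finally show ?case .
qed

lemma geom_le2: "(\<Sum>i\<le>K. (1/2::real) ^ i) \<le> 2" using geom_sum[of K] by simp
lemma geom2_le4: "(\<Sum>i\<le>K. real (i+1) * (1/2::real) ^ i) \<le> 4" using geom_sum2[of K] by simp

lemma geom_half_le1: "(\<Sum>i\<le>K. (1/2::real) ^ (i+1)) \<le> 1"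
proof -
  have "(\<Sum>i\<le>K. (1/2::real) ^ (i+1)) = (1/2) * (\<Sum>i\<le>K. (1/2) ^ i)"
    by (simp add: sum_distrib_left)
  then show ?thesis using geom_le2[of K] by simp
qed

definition canon :: "('n::finite \<Rightarrow> bool) \<Rightarrow> nat \<Rightarrow> (real^'n) set" where
  "canon \<sigma> J = dc (int J) (\<lambda>i. if \<sigma> i then 0 else -1)"

lemma canon_mono: "J \<le> J' \<Longrightarrow> canon \<sigma> J \<subseteq> canon \<sigma> J'"
proof
  fix x assume JJ: "J \<le> J'" and x: "x \<in> canon \<sigma> J"
  have ix: "idx (int J) x = (\<lambda>i. if \<sigma> i then 0 else -1)" using x by (simp add: canon_def mem_dc)
  have "idx (int J') x = (\<lambda>i. idx (int J) x i div 2 ^ nat (int J' - int J))"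
    using JJ by (intro idx_up) simp
  also have "\<dots> = (\<lambda>i. if \<sigma> i then 0 else -1)"
  proof (rule ext)
    fix i
    have p: "(0::int) < 2 ^ nat (int J' - int J)" by simp
    show "idx (int J) x i div 2 ^ nat (int J' - int J) = (if \<sigma> i then 0 else -1)"
      using ix p by (auto simp: div_eq_minus1)
  qed
  finally show "x \<in> canon \<sigma> J'" by (simp add: canon_def mem_dc)
qed

lemma canon_cover: "\<exists>\<sigma> J. x \<in> canon \<sigma> J \<and> (\<forall>J'\<ge>J. x \<in> canon \<sigma> J')"
proof -
  obtain J :: nat where J: "(\<Sum>i\<in>UNIV. \<bar>x $ i\<bar>) < 2 ^ J"
    using real_arch_pow[of 2 "\<Sum>i\<in>UNIV. \<bar>x $ i\<bar>"] by auto
  define \<sigma> where "\<sigma> i = (0 \<le> x $ i)" for i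
  have b: "\<bar>x $ i\<bar> < 2 ^ J" for i
    using J member_le_sum[of i UNIV "\<lambda>i. \<bar>x $ i\<bar>"] by auto
  have "x \<in> canon \<sigma> J"
    unfolding canon_def dc_eq_Defs[symmetric]
  proof (intro CollectI allI)
    fix i
    have e: "2 powr real_of_int (int J) = (2::real) ^ J" by (simp add: powr_realpow)
    show "2 powr real_of_int (int J) * real_of_int (if \<sigma> i then 0 else -1) \<le> x $ i \<and>
          x $ i < 2 powr real_of_int (int J) * (real_of_int (if \<sigma> i then 0 else -1) + 1)"
      unfolding e using b[of i] by (auto simp: \<sigma>_def abs_less_iff)
  qed
  then show ?thesis using canon_mono by blast
qed

lemma canon_measure:
  fixes \<sigma> :: "'n::finite \<Rightarrow> bool"
  shows "measure lebesgue (canon \<sigma> J) = (2 ^ J) ^ CARD('n)"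
  by (simp add: canon_def measure_dc powr_realpow)

lemma canon_big:
  fixes \<sigma> :: "'n::finite \<Rightarrow> bool"
  shows "\<exists>J0. \<forall>J\<ge>J0. B < measure lebesgue (canon \<sigma> J)"
proof -
  obtain J0 :: nat where J0: "B < 2 ^ J0" using real_arch_pow[of 2 B] by auto
  have "B < measure lebesgue (canon \<sigma> J)" if "J \<ge> J0" for J
  proof -
    have "(2::real) ^ J0 \<le> 2 ^ J" using that by (simp add: power_increasing)
    also have "(2::real) ^ J \<le> (2 ^ J) ^ CARD('n)"
      by (rule self_le_power) auto
    finally show ?thesis using J0 by (simp add: canon_measure)
  qed
  then show ?thesis by blast
qed

context sharp begin

lemma avg_small:
  assumes C: "C \<in> dyadic_cubes" and oC: "osc C \<le> \<eta>" and e0: "0 \<le> \<eta>" and s: "0 < s"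
    and es: "2 * \<eta> powr \<delta> < s powr \<delta>"
    and A: "emeasure lebesgue (C \<inter> {x. s < \<bar>f x\<bar>}) \<le> ennreal (measure lebesgue C / 2)"
  shows "\<bar>avg C\<bar> \<le> 2 * s"
proof (rule ccontr)
  assume big: "\<not> \<bar>avg C\<bar> \<le> 2 * s"
  have Cm[measurable]: "C \<in> sets lebesgue" using dcube_sets[OF C] .
  define m where "m = measure lebesgue C"
  have m: "0 < m" using dcube_measure_pos[OF C] by (simp add: m_def)
  have Cfin: "C \<in> fmeasurable lebesgue" using dcube_fin[OF C] .
  have sub: "C - (C \<inter> {x. s < \<bar>f x\<bar>}) \<subseteq> C \<inter> {x. s < \<bar>f x - avg C\<bar>}" using big by auto
  define a where "a = measure lebesgue (C \<inter> {x. s < \<bar>f x\<bar>})"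
  have Am: "C \<inter> {x. s < \<bar>f x\<bar>} \<in> fmeasurable lebesgue"
    by (rule fmeasurableI2[OF Cfin]) (auto)
  have a2: "a \<le> m / 2"
  proof -
    have "emeasure lebesgue (C \<inter> {x. s < \<bar>f x\<bar>}) = ennreal a"
      using Am by (simp add: a_def emeasure_eq_measure2 del: emeasure_completion)
    then show ?thesis using A m by (simp add: m_def del: emeasure_completion)
  qed
  define b where "b = measure lebesgue (C \<inter> {x. s < \<bar>f x - avg C\<bar>})"
  have Bm: "C \<inter> {x. s < \<bar>f x - avg C\<bar>} \<in> fmeasurable lebesgue"
    by (rule fmeasurableI2[OF Cfin]) auto
  have "measure lebesgue (C - (C \<inter> {x. s < \<bar>f x\<bar>})) = m - a"
    unfolding m_def a_def by (rule measure_Diff) (use Am dcube_emeasure_fin[OF C] in auto)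
  then have "m - a = measure lebesgue (C - (C \<inter> {x. s < \<bar>f x\<bar>}))" by simp
  also have "\<dots> \<le> b" unfolding b_def by (rule measure_mono_fmeasurable[OF sub]) (use Bm in auto)
  finally have mb: "m / 2 \<le> b" using a2 by simp
  have "ennreal (s powr \<delta>) * emeasure lebesgue (C \<inter> {x. s < \<bar>f x - avg C\<bar>}) \<le> J C (avg C)"
    by (rule J_cheb[OF Cm s])
  also have "\<dots> \<le> ennreal (\<eta> powr \<delta> * m)" using osc_le_J[OF C oC] by (simp add: m_def)
  finally have "ennreal (s powr \<delta> * b) \<le> ennreal (\<eta> powr \<delta> * m)"
    using Bm by (simp add: b_def emeasure_eq_measure2 ennreal_mult del: emeasure_completion)
  then have sb: "s powr \<delta> * b \<le> \<eta> powr \<delta> * m" by (subst (asm) ennreal_le_iff) (use m in auto)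
  have "s powr \<delta> * m \<le> s powr \<delta> * (2 * b)" using mb by (intro mult_left_mono) auto
  also have "\<dots> = 2 * (s powr \<delta> * b)" by simp
  also have "\<dots> \<le> 2 * (\<eta> powr \<delta> * m)" using sb by simp
  finally have "s powr \<delta> * m \<le> 2 * \<eta> powr \<delta> * m" by simp
  then have "s powr \<delta> \<le> 2 * \<eta> powr \<delta>" using m by simp
  then show False using es by simp
qed

end

locale fin = lev f \<delta> Sv \<theta> q for f :: "real^'n::finite \<Rightarrow> real" and \<delta> Sv \<theta> q +
  fixes p N' :: real
  assumes p: "1 \<le> p" and N': "0 < N'" and qp: "p + 1 \<le> real q"
    and Eb: "\<And>\<eta>. 0 < \<eta> \<Longrightarrow> emeasure lebesgue (E \<eta>) \<le> ennreal ((N' / \<eta>) powr p)"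
    and th1: "\<theta> * (2 * 4 powr (1/\<delta>) + 4 * real q * Lc + 4 * Lc) \<le> 1/2"
    and th2: "\<theta> * 2 powr (1/\<delta>) * 8 < 1"
begin

definition gg :: "nat \<Rightarrow> real" where "gg k = (N' / et k) powr p"

lemma gg_pos: "0 < gg k" using N' et_pos[of k] by (simp add: gg_def)

lemma gg_eq: "gg k = gg 0 * (2 powr p) ^ k"
proof -
  have eq: "N' / et k = (N' / et 0) * 2 ^ k" by (simp add: et_def)
  have "gg k = (N' / et 0) powr p * (2 ^ k) powr p"
    unfolding gg_def eq using N' et_pos[of 0] by (intro powr_mult)
  also have "(2 ^ k :: real) powr p = (2 powr p) ^ k"
    by (simp add: powr_power[symmetric] powr_realpow[symmetric] powr_powr mult.commute)
  finally show ?thesis by (simp add: gg_def)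
qed

lemma EE_bound: "emeasure lebesgue (EE k) \<le> ennreal (gg k)"
  using Eb[OF et_pos[of k]] by (simp add: EE_def gg_def)

lemma rho_gg: "rho i * gg (Suc i) \<le> gg 0 * (1/2) ^ (i+1)"
proof -
  have b: "(1/2) ^ q * 2 powr p \<le> (1/2::real)"
  proof -
    have "2 powr p \<le> 2 powr (real q - 1)" using qp by (intro powr_mono) auto
    also have "\<dots> = 2 ^ q / 2" by (simp add: powr_diff powr_realpow)
    finally show ?thesis by (simp add: field_simps)
  qed
  have r: "(1/2::real) ^ ((i+1)*q) = ((1/2) ^ q) ^ (i+1)"
    by (metis power_mult mult.commute)
  have "rho i * gg (Suc i) = gg 0 * ((1/2) ^ q * 2 powr p) ^ (i+1)"
    unfolding rho_def gg_eq[of "Suc i"] r power_mult_distrib by simp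
  also have "\<dots> \<le> gg 0 * (1/2) ^ (i+1)"
    using b gg_pos[of 0] by (intro mult_left_mono power_mono) auto
  finally show ?thesis .
qed

lemma et_eq: "et i = \<theta> * Sv * (1/2) ^ i" by (simp add: et_def field_simps)

lemma sig_bound: "sig K \<le> Sv / 2"
proof -
  have t: "(\<Sum>i\<le>K. tau i) = \<theta> * Sv * (4 powr (1/\<delta>) * (\<Sum>i\<le>K. (1/2) ^ i) + real q * Lc * (\<Sum>i\<le>K. real (i+1) * (1/2) ^ i))"
    by (simp add: tau_def et_eq sum.distrib sum_distrib_left sum_distrib_right algebra_simps)
  have "4 powr (1/\<delta>) * (\<Sum>i\<le>K. (1/2::real) ^ i) + real q * Lc * (\<Sum>i\<le>K. real (i+1) * (1/2) ^ i)
      \<le> 4 powr (1/\<delta>) * 2 + real q * Lc * 4"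
    using geom_le2[of K] geom2_le4[of K] Lc_pos by (intro add_mono mult_left_mono) auto
  then have "(\<Sum>i\<le>K. tau i) \<le> \<theta> * Sv * (4 powr (1/\<delta>) * 2 + real q * Lc * 4)"
    unfolding t using Sv th by (intro mult_left_mono) auto
  moreover have "0 \<le> 2 * Lc * et K" using Lc_pos et_pos[of K] by simp
  ultimately have "sig K \<le> \<theta> * Sv * (4 powr (1/\<delta>) * 2 + real q * Lc * 4) + 4 * Lc * \<theta> * Sv"
    unfolding sig_def by linarith
  also have "\<dots> = Sv * (\<theta> * (2 * 4 powr (1/\<delta>) + 4 * real q * Lc + 4 * Lc))" by (simp add: algebra_simps)
  also have "\<dots> \<le> Sv * (1/2)" using th1 Sv by (intro mult_left_mono) auto
  finally show ?thesis by simp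
qed

lemma small_eta: "2 * et K powr \<delta> < (Sv / 8) powr \<delta>"
proof -
  have a: "et K \<le> \<theta> * Sv" using et_anti[of 0 K] by (simp add: et_0)
  have "et K * 2 powr (1/\<delta>) < Sv / 8"
  proof -
    have "et K * 2 powr (1/\<delta>) \<le> \<theta> * Sv * 2 powr (1/\<delta>)" using a by (intro mult_right_mono) auto
    also have "\<dots> < Sv / 8" using th2 Sv by (simp add: algebra_simps)
    finally show ?thesis .
  qed
  then have "(et K * 2 powr (1/\<delta>)) powr \<delta> < (Sv / 8) powr \<delta>"
    using et_pos[of K] d0 by (intro powr_less_mono2) auto
  moreover have "(et K * 2 powr (1/\<delta>)) powr \<delta> = 2 * et K powr \<delta>"
    using et_pos[of K] d0 by (simp add: powr_mult powr_powr)
  ultimately show ?thesis by simp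
qed

end

context fin begin

lemma cube_bound:
  assumes C: "C \<in> dyadic_cubes" and big: "gg 0 < measure lebesgue C"
    and A: "emeasure lebesgue {x. Sv / 8 < \<bar>f x\<bar>} \<le> ennreal (measure lebesgue C / 2)"
  shows "emeasure lebesgue (C \<inter> {x. Sv < \<bar>f x\<bar>}) \<le> ennreal (2 * gg 0)"
proof -
  have Cm[measurable]: "C \<in> sets lebesgue" using dcube_sets[OF C] .
  have "{x \<in> space lebesgue. Sv / 8 < \<bar>f x\<bar>} \<in> sets lebesgue" by measurable
  then have Am: "{x. Sv / 8 < \<bar>f x\<bar>} \<in> sets lebesgue" by simp
  have emC: "emeasure lebesgue C = ennreal (measure lebesgue C)"
    using dcube_emeasure[OF C] dcube_measure[OF C] by (simp del: emeasure_completion)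
  have ex: "\<exists>k. measure lebesgue C \<le> gg k"
  proof -
    have "1 < 2 powr p" using p by simp
    then obtain n where "measure lebesgue C / gg 0 < (2 powr p) ^ n" using real_arch_pow by blast
    then have "measure lebesgue C < gg 0 * (2 powr p) ^ n" using gg_pos[of 0] by (simp add: field_simps)
    then show ?thesis using gg_eq[of n] by (intro exI[of _ n]) simp
  qed
  define K1 where "K1 = (LEAST k. measure lebesgue C \<le> gg k)"
  have K1a: "measure lebesgue C \<le> gg K1" unfolding K1_def using ex by (rule LeastI_ex)
  have "K1 \<noteq> 0"
  proof
    assume "K1 = 0" then show False using K1a big by simp
  qed
  then obtain K where K: "K1 = Suc K" by (cases K1) auto
  have CK: "measure lebesgue C \<le> gg (Suc K)" using K1a K by simp
  have KC: "gg K < measure lebesgue C"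
    using not_less_Least[of K "\<lambda>k. measure lebesgue C \<le> gg k"] K unfolding K1_def by simp
  obtain y where yC: "y \<in> C" and yE: "y \<notin> EE K"
  proof -
    have "\<not> C \<subseteq> EE K"
    proof
      assume "C \<subseteq> EE K"
      then have "emeasure lebesgue C \<le> emeasure lebesgue (EE K)" by (intro emeasure_mono) auto
      also have "\<dots> \<le> ennreal (gg K)" by (rule EE_bound)
      finally have "measure lebesgue C \<le> gg K" using emC gg_pos[of K] by (simp add: ennreal_le_iff)
      then show False using KC by simp
    qed
    then show thesis using that by blast
  qed
  have oC: "osc C \<le> et K"
    using osc_le_notin_E[of "et K" y C] yE yC C et_pos[of K] by (simp add: EE_def less_imp_le)
  have aC: "\<bar>avg C\<bar> \<le> 2 * (Sv / 8)"
  proof (rule avg_small[OF C oC _ _ small_eta])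
    show "0 \<le> et K" using et_pos[of K] by simp
    show "0 < Sv / 8" using Sv by simp
    have "emeasure lebesgue (C \<inter> {x. Sv / 8 < \<bar>f x\<bar>}) \<le> emeasure lebesgue {x. Sv / 8 < \<bar>f x\<bar>}"
      by (rule emeasure_mono[OF _ Am]) blast
    then show "emeasure lebesgue (C \<inter> {x. Sv / 8 < \<bar>f x\<bar>}) \<le> ennreal (measure lebesgue C / 2)" using A by simp
  qed
  have incl: "C \<inter> {x. Sv < \<bar>f x\<bar>} \<subseteq> EE 0 \<union> {x\<in>C - EE 0. sig K < \<bar>f x - avg C\<bar>}"
    using aC sig_bound[of K] Sv by auto
  have "emeasure lebesgue (C \<inter> {x. Sv < \<bar>f x\<bar>}) \<le> emeasure lebesgue (EE 0 \<union> {x\<in>C - EE 0. sig K < \<bar>f x - avg C\<bar>})"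
    using incl by (intro emeasure_mono) auto
  also have "\<dots> \<le> emeasure lebesgue (EE 0) + emeasure lebesgue {x\<in>C - EE 0. sig K < \<bar>f x - avg C\<bar>}"
    by (intro emeasure_subadditive) auto
  also have "\<dots> \<le> ennreal (gg 0) + (ennreal (rho K) * emeasure lebesgue C + (\<Sum>i<K. ennreal (rho i) * emeasure lebesgue (EE (Suc i) \<inter> C)))"
    using EE_bound[of 0] claim[OF C oC] by (rule add_mono)
  also have "ennreal (rho K) * emeasure lebesgue C + (\<Sum>i<K. ennreal (rho i) * emeasure lebesgue (EE (Suc i) \<inter> C))
      \<le> (\<Sum>i<Suc K. ennreal (gg 0 * (1/2) ^ (i+1)))"
  proof -
    have t1: "ennreal (rho K) * emeasure lebesgue C \<le> ennreal (gg 0 * (1/2) ^ (K+1))"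
    proof -
      have "ennreal (rho K) * emeasure lebesgue C \<le> ennreal (rho K) * ennreal (gg (Suc K))"
        using emC CK by (intro mult_left_mono) (auto intro: ennreal_leI)
      also have "\<dots> = ennreal (rho K * gg (Suc K))"
        by (rule ennreal_mult[symmetric]) (use gg_pos[of "Suc K"] in \<open>auto simp: rho_def\<close>)
      also have "\<dots> \<le> ennreal (gg 0 * (1/2) ^ (K+1))" using rho_gg by (rule ennreal_leI)
      finally show ?thesis .
    qed
    have t2: "ennreal (rho i) * emeasure lebesgue (EE (Suc i) \<inter> C) \<le> ennreal (gg 0 * (1/2) ^ (i+1))" for i
    proof -
      have "emeasure lebesgue (EE (Suc i) \<inter> C) \<le> emeasure lebesgue (EE (Suc i))" by (intro emeasure_mono) auto
      also have "\<dots> \<le> ennreal (gg (Suc i))" by (rule EE_bound)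
      finally have "ennreal (rho i) * emeasure lebesgue (EE (Suc i) \<inter> C) \<le> ennreal (rho i) * ennreal (gg (Suc i))"
        by (rule mult_left_mono) simp
      also have "\<dots> = ennreal (rho i * gg (Suc i))"
        by (rule ennreal_mult[symmetric]) (use gg_pos[of "Suc i"] in \<open>auto simp: rho_def\<close>)
      also have "\<dots> \<le> ennreal (gg 0 * (1/2) ^ (i+1))" using rho_gg by (rule ennreal_leI)
      finally show ?thesis .
    qed
    have "ennreal (rho K) * emeasure lebesgue C + (\<Sum>i<K. ennreal (rho i) * emeasure lebesgue (EE (Suc i) \<inter> C))
        \<le> ennreal (gg 0 * (1/2) ^ (K+1)) + (\<Sum>i<K. ennreal (gg 0 * (1/2) ^ (i+1)))"
      using t1 t2 by (intro add_mono sum_mono) auto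
    also have "\<dots> = (\<Sum>i<Suc K. ennreal (gg 0 * (1/2) ^ (i+1)))" by (simp add: add.commute)
    finally show ?thesis .
  qed
  also have "(\<Sum>i<Suc K. ennreal (gg 0 * (1/2) ^ (i+1))) = ennreal (\<Sum>i\<le>K. gg 0 * (1/2) ^ (i+1))"
    using gg_pos[of 0] by (simp add: sum_ennreal lessThan_Suc_atMost)
  also have "(\<Sum>i\<le>K. gg 0 * (1/2::real) ^ (i+1)) \<le> gg 0"
  proof -
    have "(\<Sum>i\<le>K. gg 0 * (1/2::real) ^ (i+1)) = gg 0 * (\<Sum>i\<le>K. (1/2::real) ^ (i+1))"
      by (rule sum_distrib_left[symmetric])
    also have "\<dots> \<le> gg 0 * 1" using geom_half_le1[of K] gg_pos[of 0] by (intro mult_left_mono) auto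
    finally show ?thesis by simp
  qed
  finally have "emeasure lebesgue (C \<inter> {x. Sv < \<bar>f x\<bar>}) \<le> ennreal (gg 0) + ennreal (gg 0)"
    by (simp add: add_left_mono ennreal_leI)
  also have "\<dots> = ennreal (2 * gg 0)" using gg_pos[of 0] by (simp add: ennreal_plus[symmetric])
  finally show ?thesis .
qed

end

context fin begin

lemma measure_A_bound:
  assumes Afin: "\<And>t. 0 < t \<Longrightarrow> emeasure lebesgue {x. t < \<bar>f x\<bar>} < \<infinity>"
  shows "emeasure lebesgue {x. Sv < \<bar>f x\<bar>} \<le> ennreal (real CARD('n \<Rightarrow> bool) * (2 * gg 0))"
proof -
  define A where "A = {x. Sv < \<bar>f x\<bar>}"
  have "{x \<in> space lebesgue. Sv < \<bar>f x\<bar>} \<in> sets lebesgue" by measurable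
  then have Am: "A \<in> sets lebesgue" by (simp add: A_def)
  have "{x \<in> space lebesgue. Sv / 8 < \<bar>f x\<bar>} \<in> sets lebesgue" by measurable
  then have A8m: "{x. Sv / 8 < \<bar>f x\<bar>} \<in> sets lebesgue" by simp
  define a8 where "a8 = measure lebesgue {x. Sv / 8 < \<bar>f x\<bar>}"
  have a8: "emeasure lebesgue {x. Sv / 8 < \<bar>f x\<bar>} = ennreal a8"
    using Afin[of "Sv/8"] Sv by (simp add: a8_def emeasure_eq_ennreal_measure less_top del: emeasure_completion)
  have J0ex: "\<exists>J0. \<forall>J\<ge>J0. max (gg 0) (2 * a8) < measure lebesgue (canon \<sigma> J)" for \<sigma> :: "'n \<Rightarrow> bool"
    by (rule canon_big)
  define J0 where "J0 \<sigma> = (SOME J0. \<forall>J\<ge>J0. max (gg 0) (2 * a8) < measure lebesgue (canon \<sigma> J))" for \<sigma> :: "'n \<Rightarrow> bool"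
  have J0: "\<And>\<sigma> J. J \<ge> J0 \<sigma> \<Longrightarrow> max (gg 0) (2 * a8) < measure lebesgue (canon \<sigma> J)"
    unfolding J0_def using someI_ex[OF J0ex] by blast
  have bnd: "emeasure lebesgue (A \<inter> canon \<sigma> J) \<le> ennreal (2 * gg 0)" if J: "J \<ge> J0 \<sigma>" for \<sigma> J
  proof -
    have Cd: "canon \<sigma> J \<in> dyadic_cubes" by (simp add: canon_def)
    have m: "max (gg 0) (2 * a8) < measure lebesgue (canon \<sigma> J)" using J0[OF J] .
    have "emeasure lebesgue (canon \<sigma> J \<inter> {x. Sv < \<bar>f x\<bar>}) \<le> ennreal (2 * gg 0)"
    proof (rule cube_bound[OF Cd])
      show "gg 0 < measure lebesgue (canon \<sigma> J)" using m by simp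
      show "emeasure lebesgue {x. Sv / 8 < \<bar>f x\<bar>} \<le> ennreal (measure lebesgue (canon \<sigma> J) / 2)"
        using m a8 by (simp add: ennreal_leI del: emeasure_completion)
    qed
    then show ?thesis by (simp add: A_def Int_commute)
  qed
  have orth: "emeasure lebesgue (\<Union>J. A \<inter> canon \<sigma> (J0 \<sigma> + J)) \<le> ennreal (2 * gg 0)" for \<sigma>
  proof -
    have r: "range (\<lambda>J. A \<inter> canon \<sigma> (J0 \<sigma> + J)) \<subseteq> sets lebesgue"
      using Am by (auto simp: canon_def)
    have inc: "incseq (\<lambda>J. A \<inter> canon \<sigma> (J0 \<sigma> + J))"
      unfolding incseq_def
    proof (intro allI impI)
      fix m n :: nat assume "n \<ge> m"
      then have "canon \<sigma> (J0 \<sigma> + m) \<subseteq> canon \<sigma> (J0 \<sigma> + n)" by (intro canon_mono) simp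
      then show "A \<inter> canon \<sigma> (J0 \<sigma> + m) \<le> A \<inter> canon \<sigma> (J0 \<sigma> + n)" by blast
    qed
    have "emeasure lebesgue (\<Union>J. A \<inter> canon \<sigma> (J0 \<sigma> + J)) = (SUP J. emeasure lebesgue (A \<inter> canon \<sigma> (J0 \<sigma> + J)))"
      using SUP_emeasure_incseq[OF r inc] by simp
    also have "\<dots> \<le> ennreal (2 * gg 0)" by (rule SUP_least) (rule bnd, simp)
    finally show ?thesis .
  qed
  have cover: "A \<subseteq> (\<Union>\<sigma>\<in>UNIV. \<Union>J. A \<inter> canon \<sigma> (J0 \<sigma> + J))"
  proof
    fix x assume xA: "x \<in> A"
    obtain \<sigma> Jx where "\<forall>J'\<ge>Jx. x \<in> canon \<sigma> J'" using canon_cover[of x] by blast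
    then have "x \<in> canon \<sigma> (J0 \<sigma> + Jx)" by simp
    then show "x \<in> (\<Union>\<sigma>\<in>UNIV. \<Union>J. A \<inter> canon \<sigma> (J0 \<sigma> + J))" using xA by blast
  qed
  have Um: "(\<Union>J. A \<inter> canon \<sigma> (J0 \<sigma> + J)) \<in> sets lebesgue" for \<sigma>
    using Am by (auto simp: canon_def)
  have UUm: "(\<Union>\<sigma>\<in>UNIV. \<Union>J. A \<inter> canon \<sigma> (J0 \<sigma> + J)) \<in> sets lebesgue"
    by (rule sets.finite_UN) (use Um in auto)
  have "emeasure lebesgue A \<le> emeasure lebesgue (\<Union>\<sigma>\<in>UNIV. \<Union>J. A \<inter> canon \<sigma> (J0 \<sigma> + J))"
    by (rule emeasure_mono[OF cover UUm])
  also have "\<dots> \<le> (\<Sum>\<sigma>\<in>UNIV. emeasure lebesgue (\<Union>J. A \<inter> canon \<sigma> (J0 \<sigma> + J)))"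
    by (rule emeasure_subadditive_finite) (use Um in auto)
  also have "\<dots> \<le> (\<Sum>\<sigma>\<in>(UNIV::('n \<Rightarrow> bool) set). ennreal (2 * gg 0))"
    by (rule sum_mono) (rule orth)
  also have "\<dots> = ennreal (real CARD('n \<Rightarrow> bool) * (2 * gg 0))"
    using gg_pos[of 0] by (simp add: ennreal_mult ennreal_of_nat_eq_real_of_nat)
  finally show ?thesis by (simp add: A_def)
qed

end

context sharp begin

lemma weak_E:
  assumes W: "weak_Lp_norm p (sharp_max_dyadic \<delta> f) = ennreal N0" and p: "1 \<le> p"
    and N0: "0 \<le> N0" "N0 \<le> N'" and eta: "0 < \<eta>"
  shows "emeasure lebesgue (E \<eta>) \<le> ennreal ((N' / \<eta>) powr p)"
proof -
  define tm where "tm = (if emeasure lebesgue {x. ennreal \<eta> < sharp_max_dyadic \<delta> f x} = \<infinity> then \<infinity>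
       else ennreal (\<eta> * measure lebesgue {x. ennreal \<eta> < sharp_max_dyadic \<delta> f x} powr (1 / p)))"
  have "tm \<le> weak_Lp_norm p (sharp_max_dyadic \<delta> f)"
    unfolding weak_Lp_norm_def tm_def using eta by (intro SUP_upper) auto
  then have tle: "tm \<le> ennreal N0" using W by simp
  have EE: "{x. ennreal \<eta> < sharp_max_dyadic \<delta> f x} = E \<eta>" by (simp add: E_def)
  have fin: "emeasure lebesgue (E \<eta>) \<noteq> \<infinity>"
  proof
    assume "emeasure lebesgue (E \<eta>) = \<infinity>"
    then have "tm = \<infinity>" by (simp add: tm_def EE)
    then show False using tle by (simp add: top_unique)
  qed
  define m where "m = measure lebesgue (E \<eta>)"
  have m0: "0 \<le> m" by (simp add: m_def)
  have em: "emeasure lebesgue (E \<eta>) = ennreal m" using fin by (simp add: m_def emeasure_eq_ennreal_measure)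
  have "ennreal (\<eta> * m powr (1 / p)) \<le> ennreal N0" using tle fin by (simp add: tm_def EE m_def)
  then have "\<eta> * m powr (1 / p) \<le> N0" using N0 by (simp add: ennreal_le_iff)
  then have "m powr (1 / p) \<le> N' / \<eta>" using eta N0 by (simp add: field_simps)
  then have "(m powr (1 / p)) powr p \<le> (N' / \<eta>) powr p" using p m0 by (intro powr_mono2) auto
  then have "m \<le> (N' / \<eta>) powr p" using p m0 by (simp add: powr_powr)
  then show ?thesis using em by (simp add: ennreal_leI)
qed

end

lemma li_cube:
  fixes Q :: "(real^'n::finite) set"
  assumes "locally_integrable f" "Q \<in> dyadic_cubes"
  shows "set_integrable lebesgue Q f"
proof -
  obtain k m where Q: "Q = dc k m" using assms(2) dyadic_cubes_iff by blast
  define a :: "real^'n" where "a = (\<chi> i. 2 powr real_of_int k * of_int (m i))"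
  define b :: "real^'n" where "b = (\<chi> i. 2 powr real_of_int k * (of_int (m i) + 1))"
  have sub: "Q \<subseteq> cbox a b" using dc_box(2)[of k m] by (simp add: Q a_def b_def)
  have "set_integrable lebesgue (cbox a b) f" using assms(1) compact_cbox by (auto simp: locally_integrable_def)
  then show ?thesis by (rule set_integrable_subset) (use sub assms(2) dcube_sets in auto)
qed

theorem lemma3p2:
  fixes \<delta> :: real
  assumes "0 < \<delta>" and "\<delta> < 1"
  shows "\<exists>c::real. c > 0 \<and>
    (\<forall>(p::real) (f :: real ^ 'n \<Rightarrow> real).
       1 \<le> p \<longrightarrow> locally_integrable f \<longrightarrow>
       (\<forall>t>0. emeasure lebesgue {x. t < \<bar>f x\<bar>} < \<infinity>) \<longrightarrow>
       weak_Lp_norm p (\<lambda>x. ennreal \<bar>f x\<bar>)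
         \<le> ennreal (c * p) * weak_Lp_norm p (sharp_max_dyadic \<delta> f))"
proof -
  define L :: real where "L = (2 ^ (CARD('n) + 1) + 1) powr (1 / \<delta>)"
  define M :: real where "M = 4 * 4 powr (1/\<delta>) + 32 * L + 8 * 2 powr (1/\<delta>) + 1"
  define K1 :: real where "K1 = 2 * real CARD('n \<Rightarrow> bool)"
  define c where "c = K1 * M"
  have bp: "(0::real) < 2 ^ (CARD('n) + 1) + 1"
    by (metis add_pos_pos zero_less_one zero_less_numeral zero_less_power)
  have L0: "0 < L" unfolding L_def using bp by simp
  have A0: "0 < 4 powr (1/\<delta>)" and B0: "0 < 2 powr (1/\<delta>)" by simp_all
  have M1: "1 \<le> M" using L0 by (simp add: M_def)
  have M0: "0 < M" using M1 by simp
  have "0 < CARD('n \<Rightarrow> bool)" by (rule zero_less_card_finite)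
  then have "(1::real) \<le> real CARD('n \<Rightarrow> bool)" by (metis of_nat_1 of_nat_le_iff Suc_leI One_nat_def)
  then have K11: "1 \<le> K1" unfolding K1_def by linarith
  have c0: "0 < c" using M0 K11 by (simp add: c_def)
  show ?thesis
  proof (intro exI[of _ c] conjI allI impI)
    show "0 < c" by (rule c0)
    fix p :: real and f :: "real^'n \<Rightarrow> real"
    assume p: "1 \<le> p" and li: "locally_integrable f"
      and Af: "\<forall>t>0. emeasure lebesgue {x. t < \<bar>f x\<bar>} < \<infinity>"
    interpret S: sharp f \<delta>
      by unfold_locales (use assms li li_cube in \<open>auto simp: locally_integrable_def\<close>)
    have LL: "S.Lc = L" by (simp add: S.Lc_def L_def)
    define W where "W = weak_Lp_norm p (sharp_max_dyadic \<delta> f)"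
    have cp0: "0 < c * p" using c0 p by simp
    show "weak_Lp_norm p (\<lambda>x. ennreal \<bar>f x\<bar>) \<le> ennreal (c * p) * W"
    proof (cases "W = \<infinity>")
      case True
      have "ennreal (c * p) * W = \<infinity>" using True cp0 c0 p by (simp add: ennreal_mult_top)
      then show ?thesis by simp
    next
      case False
      then obtain N0 where N0: "W = ennreal N0" "0 \<le> N0" by (cases W) auto
      have main: "t * measure lebesgue {x. t < \<bar>f x\<bar>} powr (1/p) \<le> c * p * N'"
        if t: "0 < t" and N': "N0 \<le> N'" "0 < N'" for t N'
      proof -
        define \<theta> where "\<theta> = 1 / (M * p)"
        define q where "q = nat \<lceil>p\<rceil> + 1"
        have th0: "0 < \<theta>" using M0 p by (simp add: \<theta>_def)
        have qq: "real q = real_of_int \<lceil>p\<rceil> + 1" using p by (simp add: q_def)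
        have c1: "p \<le> real_of_int \<lceil>p\<rceil>" by (rule le_of_int_ceiling)
        have c2: "real_of_int \<lceil>p\<rceil> \<le> p + 1" by (rule of_int_ceiling_le_add_one)
        have q1: "p + 1 \<le> real q" using qq c1 by linarith
        have q2: "real q \<le> 3 * p" using qq c2 p by linarith
        interpret F: fin f \<delta> t \<theta> q p N'
        proof unfold_locales
          show "0 < t" "0 < \<theta>" "1 \<le> p" "0 < N'" "p + 1 \<le> real q" using t th0 p N' q1 by auto
          show "\<And>\<eta>. 0 < \<eta> \<Longrightarrow> emeasure lebesgue (S.E \<eta>) \<le> ennreal ((N' / \<eta>) powr p)"
            using S.weak_E[of p N0 N'] N0 N' p unfolding W_def by auto
          have Y: "2 * 4 powr (1/\<delta>) + 4 * real q * L + 4 * L \<le> p * (2 * 4 powr (1/\<delta>) + 16 * L)"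
          proof -
            have f1: "real q * L \<le> 3 * (p * L)" using q2 L0 by (simp add: mult_right_mono mult.assoc[symmetric])
            have f2: "4 powr (1/\<delta>) \<le> p * 4 powr (1/\<delta>)" using p A0 by simp
            have f3: "L \<le> p * L" using p L0 by simp
            have e1: "2 * 4 powr (1/\<delta>) + 4 * real q * L + 4 * L = 2 * 4 powr (1/\<delta>) + 4 * (real q * L) + 4 * L" by simp
            have e2: "p * (2 * 4 powr (1/\<delta>) + 16 * L) = 2 * (p * 4 powr (1/\<delta>)) + 16 * (p * L)" by (simp add: algebra_simps)
            show ?thesis unfolding e1 e2 using f1 f2 f3 by linarith
          qed
          have "\<theta> * (2 * 4 powr (1/\<delta>) + 4 * real q * L + 4 * L) \<le> \<theta> * (p * (2 * 4 powr (1/\<delta>) + 16 * L))"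
            using Y th0 by (intro mult_left_mono) auto
          also have "\<dots> = (2 * 4 powr (1/\<delta>) + 16 * L) / M" using p M0 by (simp add: \<theta>_def)
          also have "\<dots> \<le> 1/2"
            apply (subst pos_divide_le_eq[OF M0]) unfolding M_def using B0 by (simp add: ring_distribs)
          finally show "\<theta> * (2 * 4 powr (1/\<delta>) + 4 * real q * S.Lc + 4 * S.Lc) \<le> 1/2" by (simp add: LL)
          have "\<theta> * 2 powr (1/\<delta>) * 8 = (8 * 2 powr (1/\<delta>)) / (M * p)" by (simp add: \<theta>_def)
          also have "\<dots> \<le> (8 * 2 powr (1/\<delta>)) / M" using p M0 by (intro divide_left_mono) auto
          also have "\<dots> < 1"
            apply (subst pos_divide_less_eq[OF M0]) unfolding M_def using A0 L0 by (simp add: ring_distribs add_pos_pos)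
          finally show "\<theta> * 2 powr (1/\<delta>) * 8 < 1" .
        qed
        have bA: "emeasure lebesgue {x. t < \<bar>f x\<bar>} \<le> ennreal (real CARD('n \<Rightarrow> bool) * (2 * F.gg 0))"
          by (rule F.measure_A_bound) (use Af in auto)
        have gg0: "F.gg 0 = (N' / (\<theta> * t)) powr p" by (simp add: F.gg_def F.et_0)
        define m where "m = measure lebesgue {x. t < \<bar>f x\<bar>}"
        have m0: "0 \<le> m" by (simp add: m_def)
        have mfin: "emeasure lebesgue {x. t < \<bar>f x\<bar>} = ennreal m"
          using Af t by (simp add: m_def emeasure_eq_ennreal_measure less_top del: emeasure_completion)
        have mb: "m \<le> K1 * (N' / (\<theta> * t)) powr p"
          using bA mfin F.gg_pos[of 0] gg0 by (simp add: K1_def ennreal_le_iff del: emeasure_completion)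
        have Nt: "0 < N' / (\<theta> * t)" using N' th0 t by simp
        have "m powr (1/p) \<le> (K1 * (N' / (\<theta> * t)) powr p) powr (1/p)"
          using mb m0 p by (intro powr_mono2) auto
        also have "\<dots> = K1 powr (1/p) * (N' / (\<theta> * t))"
          using K11 Nt p N' th0 t by (simp add: powr_mult powr_powr)
        also have "\<dots> \<le> K1 * (N' / (\<theta> * t))"
        proof -
          have "K1 powr (1/p) \<le> K1 powr 1" using K11 p by (intro powr_mono) auto
          then show ?thesis using Nt K11 by (intro mult_right_mono) auto
        qed
        finally have "t * m powr (1/p) \<le> t * (K1 * (N' / (\<theta> * t)))" using t by (intro mult_left_mono) auto
        also have "\<dots> = K1 * M * p * N'" using t M0 p by (simp add: \<theta>_def field_simps)
        finally show ?thesis by (simp add: m_def c_def)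
      qed
      have "weak_Lp_norm p (\<lambda>x. ennreal \<bar>f x\<bar>) \<le> ennreal (c * p * N0)"
        unfolding weak_Lp_norm_def
      proof (rule SUP_least)
        fix t :: real assume "t \<in> {0<..}"
        then have t: "0 < t" by simp
        have set: "{x. ennreal t < ennreal \<bar>f x\<bar>} = {x. t < \<bar>f x\<bar>}" using t by (auto simp: ennreal_less_iff)
        have fin: "emeasure lebesgue {x. t < \<bar>f x\<bar>} \<noteq> \<infinity>" using Af t by auto
        have le: "t * measure lebesgue {x. t < \<bar>f x\<bar>} powr (1/p) \<le> c * p * N0"
        proof (rule field_le_epsilon)
          fix e :: real assume e: "0 < e"
          have "t * measure lebesgue {x. t < \<bar>f x\<bar>} powr (1/p) \<le> c * p * (N0 + e / (c * p))"
          proof (rule main[OF t])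
            have "0 < e / (c * p)" using e cp0 by simp
            then show "N0 \<le> N0 + e / (c * p)" "0 < N0 + e / (c * p)" using N0 by auto
          qed
          also have "\<dots> = c * p * N0 + e" using cp0 c0 p by (simp add: field_simps)
          finally show "t * measure lebesgue {x. t < \<bar>f x\<bar>} powr (1/p) \<le> c * p * N0 + e" .
        qed
        show "(if emeasure lebesgue {x. ennreal t < ennreal \<bar>f x\<bar>} = \<infinity> then \<infinity>
            else ennreal (t * measure lebesgue {x. ennreal t < ennreal \<bar>f x\<bar>} powr (1 / p))) \<le> ennreal (c * p * N0)"
          using fin le by (simp add: set ennreal_leI)
      qed
      also have "\<dots> = ennreal (c * p) * W" using N0 cp0 by (simp add: ennreal_mult)
      finally show ?thesis .
    qed
  qed
qed

end
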